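(* The holomorphic sectional curvature of $({\rm M}_1,\gamma)$ is unbounded above.
   Context: ${\rm M}_1$ is the space of degree one rational maps $W(z)=\frac{az+b}{cz+d}$, $ad-bc\neq0$, of the Riemann sphere, with complex structure $J$ induced by the open inclusion ${\rm M}_1\subset\mathbb{C}P^3$, $W\mapsto[a:b:c:d]$. $\gamma$ is the $L^2$ metric: for a tangent vector represented by a variation $\dot W$, $\gamma(\dot W,\dot W)=\int_{\mathbb{C}}\frac{2\,dx\,dy}{(1+|z|^2)^2}\frac{|\dot W|^2}{(1+|W|^2)^2}$ ($z=x+iy$; stereographic coordinates on both spheres); $\gamma$ is K\"ahler with respect to $J$. The holomorphic sectional curvature of a unit vector $X$ is ${\rm Hol}(X)=\langle R(X,JX)JX,X\rangle$, $R$ the Riemann curvature tensor of $\gamma$. *)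

theory Defs
  imports "HOL-Analysis.Analysis"
begin

type_synonym coeffs4 = "complex \<times> complex \<times> complex \<times> complex"

definition Wmap :: "coeffs4 \<Rightarrow> complex \<Rightarrow> complex" where
  "Wmap p z = (case p of (a,b,c,d) \<Rightarrow> (a*z + b) / (c*z + d))"

text \<open>Variation of W when the coefficients move in direction q = (a',b',c',d').\<close>
definition Wdot :: "coeffs4 \<Rightarrow> coeffs4 \<Rightarrow> complex \<Rightarrow> complex" where
  "Wdot p q z = (case p of (a,b,c,d) \<Rightarrow> case q of (a',b',c',d') \<Rightarrow>
      ((a'*z + b')*(c*z + d) - (a*z + b)*(c'*z + d')) / (c*z + d)^2)"

text \<open>The four standard affine charts of CP^3 (slot k normalised to 1); complex^3 carries
  the induced complex structure, J = multiplication by i.\<close>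
definition chart :: "nat \<Rightarrow> complex^3 \<Rightarrow> coeffs4" where
  "chart k x = (if k = 0 then (1, x$0, x$1, x$2)
      else if k = 1 then (x$0, 1, x$1, x$2)
      else if k = 2 then (x$0, x$1, 1, x$2)
      else (x$0, x$1, x$2, 1))"

definition chart_var :: "nat \<Rightarrow> complex^3 \<Rightarrow> coeffs4" where
  "chart_var k u = (if k = 0 then (0, u$0, u$1, u$2)
      else if k = 1 then (u$0, 0, u$1, u$2)
      else if k = 2 then (u$0, u$1, 0, u$2)
      else (u$0, u$1, u$2, 0))"

definition in_M1 :: "coeffs4 \<Rightarrow> bool" where
  "in_M1 p = (case p of (a,b,c,d) \<Rightarrow> a*d - b*c \<noteq> 0)"

definition chart_dom :: "nat \<Rightarrow> (complex^3) set" where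
  "chart_dom k = {x. in_M1 (chart k x)}"

definition Jc :: "complex^3 \<Rightarrow> complex^3" where
  "Jc u = \<i> *s u"

text \<open>L2 quadratic form gamma(Wdot,Wdot), integral over C with Lebesgue measure dx dy.\<close>
definition L2Q :: "nat \<Rightarrow> complex^3 \<Rightarrow> complex^3 \<Rightarrow> real" where
  "L2Q k x u = (LINT z|lborel.
      2 / (1 + (cmod z)^2)^2 * (cmod (Wdot (chart k x) (chart_var k u) z))^2
        / (1 + (cmod (Wmap (chart k x) z))^2)^2)"

definition gam :: "nat \<Rightarrow> complex^3 \<Rightarrow> complex^3 \<Rightarrow> complex^3 \<Rightarrow> real" where
  "gam k x u v = (L2Q k x (u + v) - L2Q k x (u - v)) / 4"

definition dd :: "(complex^3 \<Rightarrow> real) \<Rightarrow> complex^3 \<Rightarrow> complex^3 \<Rightarrow> real" where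
  "dd f x X = deriv (\<lambda>t. f (x + t *\<^sub>R X)) 0"

definition ddv :: "(complex^3 \<Rightarrow> complex^3) \<Rightarrow> complex^3 \<Rightarrow> complex^3 \<Rightarrow> complex^3" where
  "ddv F x X = vector_derivative (\<lambda>t. F (x + t *\<^sub>R X)) (at 0)"

text \<open>Levi-Civita connection on constant coordinate fields (Koszul formula):
  gam(nabla_X Y, Z) = (X gam(Y,Z) + Y gam(X,Z) - Z gam(X,Y))/2.\<close>
definition Chr :: "nat \<Rightarrow> complex^3 \<Rightarrow> complex^3 \<Rightarrow> complex^3 \<Rightarrow> complex^3" where
  "Chr k x X Y = (THE v. \<forall>Z. gam k x v Z =
      (dd (\<lambda>y. gam k y Y Z) x X + dd (\<lambda>y. gam k y X Z) x Y - dd (\<lambda>y. gam k y X Y) x Z) / 2)"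

text \<open>Riemann tensor R(X,Y)Z = nabla_X nabla_Y Z - nabla_Y nabla_X Z - nabla_[X,Y] Z
  for constant coordinate fields X Y Z (so [X,Y] = 0).\<close>
definition Riem :: "nat \<Rightarrow> complex^3 \<Rightarrow> complex^3 \<Rightarrow> complex^3 \<Rightarrow> complex^3 \<Rightarrow> complex^3" where
  "Riem k x X Y Z = ddv (\<lambda>y. Chr k y Y Z) x X - ddv (\<lambda>y. Chr k y X Z) x Y
      + Chr k x X (Chr k x Y Z) - Chr k x Y (Chr k x X Z)"

definition Hol :: "nat \<Rightarrow> complex^3 \<Rightarrow> complex^3 \<Rightarrow> real" where
  "Hol k x X = gam k x (Riem k x X (Jc X) (Jc X)) X"

end

theory Submission
  imports Defs "HOL-Real_Asymp.Real_Asymp"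
begin

lemma normsq_lessThan_eq:
  "{z::complex. (cmod z)^2 < u} = (if u \<le> 0 then {} else ball 0 (sqrt u))"
proof (cases "u \<le> 0")
  case True
  then show ?thesis by (auto simp: not_less) (smt (verit) zero_le_power2)
next
  case False
  have *: "(cmod z)^2 < u \<longleftrightarrow> cmod z < sqrt u" for z
    using False by (metis norm_ge_zero real_less_rsqrt real_sqrt_less_iff abs_of_nonneg real_sqrt_abs) 
  show ?thesis using False
    by (simp add: set_eq_iff dist_norm * del: real_sqrt_less_iff)
qed

lemma emeasure_normsq_lessThan:
  "emeasure (lborel::complex measure) {z. (cmod z)^2 < u} = ennreal (pi * max u 0)"
proof (cases "u \<le> 0")
  case True
  then show ?thesis by (simp add: normsq_lessThan_eq max_def)
next
  case False
  then show ?thesis 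
    by (simp add: normsq_lessThan_eq emeasure_ball unit_ball_vol_2 max_def)
qed

lemma sets_borel_Iio: "sets (borel::real measure) = sigma_sets UNIV (range lessThan)"
  by (subst borel_Iio) (simp add: sets_measure_of)

lemma distr_normsq:
  "distr (lborel::complex measure) borel (\<lambda>z. (cmod z)^2) = density lborel (\<lambda>t. ennreal (pi * indicator {0..} (t::real)))"
proof (rule measure_eqI_generator_eq[where E="range (lessThan::real\<Rightarrow>real set)" and \<Omega>=UNIV and A="\<lambda>i. {..< real i}"])
  show "Int_stable (range lessThan :: real set set)"
  proof (rule Int_stableI)
    fix A B assume "A \<in> range (lessThan::real \<Rightarrow> _)" "B \<in> range (lessThan::real \<Rightarrow> _)"
    then obtain a b where "A = {..<a}" "B = {..<b}" by auto
    then have "A \<inter> B = {..<min a b}" by auto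
    then show "A \<inter> B \<in> range lessThan" by auto
  qed
  show "range lessThan \<subseteq> Pow (UNIV::real set)" by auto
  show "sets (distr (lborel::complex measure) borel (\<lambda>z. (cmod z)^2)) = sigma_sets UNIV (range lessThan)"
    unfolding sets_distr by (rule sets_borel_Iio)
  show "sets (density lborel (\<lambda>t. ennreal (pi * indicator {0..} (t::real)))) = sigma_sets UNIV (range lessThan)"
    unfolding sets_density sets_lborel by (rule sets_borel_Iio)
  show "range (\<lambda>i. {..< real i}) \<subseteq> range lessThan" by auto
  show "(\<Union>i. {..< real i}) = UNIV"
    by (auto intro: reals_Archimedean2)
  have m1: "emeasure (distr (lborel::complex measure) borel (\<lambda>z. (cmod z)^2)) {..<u} = ennreal (pi * max u 0)" for u
  proof -
    have "emeasure (distr (lborel::complex measure) borel (\<lambda>z. (cmod z)^2)) {..<u}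
        = emeasure lborel {z::complex. (cmod z)^2 < u}"
      by (subst emeasure_distr) (auto simp: vimage_def)
    also have "\<dots> = ennreal (pi * max u 0)"
      by (rule emeasure_normsq_lessThan)
    finally show ?thesis .
  qed
  have m2: "emeasure (density lborel (\<lambda>t. ennreal (pi * indicator {0..} (t::real)))) {..<u} = ennreal (pi * max u 0)" for u
  proof -
    have "emeasure (density lborel (\<lambda>t. ennreal (pi * indicator {0..} (t::real)))) {..<u}
      = (\<integral>\<^sup>+ t. ennreal pi * indicator ({0..} \<inter> {..<u}) t \<partial>lborel)"
      by (subst emeasure_density) (auto intro!: nn_integral_cong simp: indicator_def)
    also have "\<dots> = ennreal pi * emeasure lborel ({0..} \<inter> {..<u})"
      by (rule nn_integral_cmult_indicator) auto
    also have "{0..} \<inter> {..<u} = {0..<u::real}" by auto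
    also have "ennreal pi * emeasure lborel {0..<u} = ennreal (pi * max u 0)"
      by (auto simp: ennreal_mult' max_def)
    finally show ?thesis .
  qed
  fix X :: "real set" assume "X \<in> range lessThan"
  then obtain u where X: "X = {..<u}" by auto
  show "emeasure (distr (lborel::complex measure) borel (\<lambda>z. (cmod z)^2)) X = emeasure (density lborel (\<lambda>t. ennreal (pi * indicator {0..} (t::real)))) X"
    using m1 m2 X by simp
next
  fix i :: nat
  show "emeasure (distr (lborel::complex measure) borel (\<lambda>z. (cmod z)^2)) {..<real i} \<noteq> \<infinity>"
    by (subst emeasure_distr) (auto simp: vimage_def emeasure_normsq_lessThan)
qed

lemma nn_integral_radial:
  assumes [measurable]: "f \<in> borel_measurable (borel::real measure)"
  shows "(\<integral>\<^sup>+ z. f ((cmod z)^2) \<partial>(lborel::complex measure))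
       = (\<integral>\<^sup>+ t. ennreal (pi * indicator {0..} (t::real)) * f t \<partial>lborel)"
proof -
  have "(\<integral>\<^sup>+ z. f ((cmod z)^2) \<partial>(lborel::complex measure))
      = (\<integral>\<^sup>+ t. f t \<partial>(distr lborel borel (\<lambda>z::complex. (cmod z)^2)))"
    by (subst nn_integral_distr) auto
  also have "\<dots> = (\<integral>\<^sup>+ t. ennreal (pi * indicator {0..} (t::real)) * f t \<partial>lborel)"
    unfolding distr_normsq by (subst nn_integral_density) auto
  finally show ?thesis .
qed

lemma integral_radial:
  fixes g :: "real \<Rightarrow> real"
  assumes [measurable]: "g \<in> borel_measurable borel"
  shows "(LINT z|(lborel::complex measure). g ((cmod z)^2)) = (LINT t|lborel. (pi * indicator {0..} t) * g t)"
proof -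
  have "(LINT z|(lborel::complex measure). g ((cmod z)^2))
       = integral\<^sup>L (distr lborel borel (\<lambda>z::complex. (cmod z)^2)) g"
    by (subst integral_distr) auto
  also have "\<dots> = (LINT t|lborel. (pi * indicator {0..} t) *\<^sub>R g t)"
    unfolding distr_normsq by (subst integral_density) auto
  finally show ?thesis by simp
qed

lemma lborel_uminus_complex: "distr (lborel::complex measure) borel uminus = lborel"
proof -
  have "(lborel::complex measure) = density (distr lborel borel (\<lambda>x. 0 + (-1::real) *\<^sub>R x)) (\<lambda>_. \<bar>-1::real\<bar>^DIM(complex))"
    by (rule lborel_affine) simp
  then show ?thesis by (simp add: density_1)
qed

lemma integral_uminus_complex:
  fixes f :: "complex \<Rightarrow> real"
  assumes [measurable]: "f \<in> borel_measurable borel"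
  shows "(LINT z|lborel. f (-z)) = (LINT z|lborel. f z)"
proof -
  have "(LINT z|lborel. f z) = integral\<^sup>L (distr lborel borel uminus) f"
    by (simp add: lborel_uminus_complex)
  also have "\<dots> = (LINT z|lborel. f (-z))"
    by (subst integral_distr) auto
  finally show ?thesis by simp
qed

lemma integral_odd_complex:
  fixes f :: "complex \<Rightarrow> real"
  assumes "f \<in> borel_measurable borel" "\<And>z. f (-z) = - f z"
  shows "(LINT z|lborel. f z) = 0"
proof -
  have "(LINT z|lborel. f z) = (LINT z|lborel. f (-z))"
    using integral_uminus_complex[OF assms(1)] by simp
  also have "\<dots> = - (LINT z|lborel. f z)"
    by (simp add: assms(2))
  finally show ?thesis by simp
qed

lemma nn_integral_w0:
  "(\<integral>\<^sup>+ z. ennreal (1/(1+(cmod z)^2)^2) \<partial>(lborel::complex measure)) = ennreal pi"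
proof -
  have "(\<integral>\<^sup>+ z. ennreal (1/(1+(cmod z)^2)^2) \<partial>(lborel::complex measure))
     = (\<integral>\<^sup>+ t. ennreal (pi * indicator {0..} (t::real)) * ennreal (1/(1+t)^2) \<partial>lborel)"
    by (rule nn_integral_radial[where f="\<lambda>t. ennreal (1/(1+t)^2)"]) measurable
  also have "\<dots> = (\<integral>\<^sup>+ t. ennreal pi * (ennreal (1/(1+t)^2) * indicator {0..} (t::real)) \<partial>lborel)"
    by (intro nn_integral_cong) (auto simp: indicator_def)
  also have "\<dots> = ennreal pi * (\<integral>\<^sup>+ t. ennreal (1/(1+t)^2) * indicator {0..} (t::real) \<partial>lborel)"
    by (rule nn_integral_cmult) measurable
  also have "(\<integral>\<^sup>+ t. ennreal (1/(1+t)^2) * indicator {0..} (t::real) \<partial>lborel) = ennreal (0 - (- 1/(1+0)))"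
  proof (rule nn_integral_FTC_atLeast)
    show "(\<lambda>t::real. 1/(1+t)^2) \<in> borel_measurable borel" by measurable
    fix x :: real assume "0 \<le> x"
    show "((\<lambda>t. - 1/(1+t)) has_real_derivative 1/(1+x)^2) (at x)"
      using \<open>0 \<le> x\<close> by (auto intro!: derivative_eq_intros simp: power2_eq_square field_simps)
    show "0 \<le> 1/(1+x)^2" by simp
  next
    show "((\<lambda>t::real. - 1/(1+t)) \<longlongrightarrow> 0) at_top" by real_asymp
  qed
  finally show ?thesis by simp
qed

lemma integrable_w0: "integrable (lborel::complex measure) (\<lambda>z. 1/(1+(cmod z)^2)^2)"
proof (rule integrableI_bounded)
  show "(\<lambda>z::complex. 1/(1+(cmod z)^2)^2) \<in> borel_measurable lborel" by measurable
  have "(\<integral>\<^sup>+ z. ennreal (norm (1/(1+(cmod z)^2)^2)) \<partial>(lborel::complex measure))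
      = (\<integral>\<^sup>+ z. ennreal (1/(1+(cmod z)^2)^2) \<partial>(lborel::complex measure))"
    by (intro nn_integral_cong) auto
  then show "(\<integral>\<^sup>+ z. ennreal (norm (1/(1+(cmod z)^2)^2)) \<partial>(lborel::complex measure)) < \<infinity>"
    using nn_integral_w0 by simp
qed

lemma pf_identity:
  fixes u q w :: real assumes "u \<noteq> 0" "q \<noteq> 0" "w \<noteq> 0" and q: "q = 1 + (1-w)*(u-1)"
  shows "(2-w)/w^3 * (1/u - (1-w)/q) - 1/(w^2*u^2) - (1-w)/(w^2* q^2) = (u-1)/(u^2* q^2)"
proof -
  have "(2-w)/w^3 * (1/u - (1-w)/q) - 1/(w^2*u^2) - (1-w)/(w^2* q^2)
     = ((2-w)*u* q*(q - (1-w)*u) - w* q^2 - (1-w)*w*u^2) / (w^3*(u^2* q^2))"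
    using assms(1-3) by (simp add: field_simps power2_eq_square power3_eq_cube)
  also have "(2-w)*u* q*(q - (1-w)*u) - w* q^2 - (1-w)*w*u^2 = w^3*(u-1)"
    unfolding q by algebra
  also have "w^3*(u-1) / (w^3*(u^2* q^2)) = (u-1)/(u^2* q^2)"
    by (rule mult_divide_mult_cancel_left) (simp add: assms)
  finally show ?thesis .
qed

definition Ic :: "real \<Rightarrow> real" where
  "Ic s = -(1+s)*ln s/(1-s)^3 - 2/(1-s)^2"

lemma Fint_closed:
  fixes s :: real assumes s: "0 < s" "s < 1"
  shows "(LINT z|(lborel::complex measure). 2*(cmod z)^2/((1+(cmod z)^2)^2*(1+s*(cmod z)^2)^2)) = 2*pi*Ic s"
    and "0 < Ic s"
proof -
  define g where "g t = t/((1+t)^2*(1+s*t)^2)" for t :: real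
  define G where "G t = (1+s)/(1-s)^3*(ln(1+t) - ln(1+s*t)) + 1/(1-s)^2*inverse(1+t) + 1/(1-s)^2*inverse(1+s*t)" for t :: real
  have gm[measurable]: "g \<in> borel_measurable borel" unfolding g_def by measurable
  have Gder: "(G has_real_derivative g x) (at x)" and gnn: "0 \<le> g x" if x: "0 \<le> x" for x
  proof -
    have p1: "1 + x > 0" "1 + s*x > 0" using x s by (auto intro: add_pos_nonneg)
    have d1: "((\<lambda>t. ln(1+t)) has_real_derivative 1/(1+x)) (at x)"
      using p1 by (auto intro!: derivative_eq_intros)
    have d2: "((\<lambda>t. ln(1+s*t)) has_real_derivative s/(1+s*x)) (at x)"
      using p1 by (auto intro!: derivative_eq_intros)
    have d3: "((\<lambda>t. inverse(1+t)) has_real_derivative -1/(1+x)^2) (at x)"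
      using p1 by (auto intro!: derivative_eq_intros simp: power2_eq_square divide_simps)
    have d4: "((\<lambda>t. inverse(1+s*t)) has_real_derivative -s/(1+s*x)^2) (at x)"
      using p1 by (auto intro!: derivative_eq_intros simp: power2_eq_square divide_simps)
    have D: "(G has_real_derivative (1+s)/(1-s)^3*(1/(1+x) - s/(1+s*x)) + 1/(1-s)^2 * (-1/(1+x)^2) + 1/(1-s)^2*(-s/(1+s*x)^2)) (at x)"
      unfolding G_def by (intro DERIV_add DERIV_cmult DERIV_diff d1 d2 d3 d4)
    have "(1+s)/(1-s)^3*(1/(1+x) - s/(1+s*x)) + 1/(1-s)^2 * (-1/(1+x)^2) + 1/(1-s)^2*(-s/(1+s*x)^2)
        = (2-(1-s))/(1-s)^3 * (1/(1+x) - (1-(1-s))/(1+s*x)) - 1/((1-s)^2*(1+x)^2) - (1-(1-s))/((1-s)^2* (1+s*x)^2)"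
      by simp
    also have "\<dots> = ((1+x)-1)/((1+x)^2* (1+s*x)^2)"
      by (rule pf_identity) (use p1 s in auto)
    also have "\<dots> = g x" by (simp add: g_def)
    finally show "(G has_real_derivative g x) (at x)" using D by simp
    show "0 \<le> g x" using p1 x by (simp add: g_def)
  qed
  have Glim: "(G \<longlongrightarrow> (- ((1+s)*ln s/(1-s)^3))) at_top"
    unfolding G_def using s by real_asymp
  have G0: "G 0 = 2/(1-s)^2" by (simp add: G_def)
  have Ic_eq: "- ((1+s)*ln s/(1-s)^3) - G 0 = Ic s"
  proof -
    have "- ((1+s)*ln s/(1-s)^3) = (-(1+s))*ln s/(1-s)^3"
      by (metis minus_divide_left mult_minus_left)
    then show ?thesis by (simp add: Ic_def G0)
  qed
  have mono: "G 0 \<le> G t" if "0 \<le> t" for t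
    by (rule DERIV_nonneg_imp_nondecreasing[OF that]) (use Gder gnn in blast)
  have "G 1 \<le> - ((1+s)*ln s/(1-s)^3)"
  proof (rule tendsto_lowerbound[OF Glim])
    have "G 1 \<le> G t" if "1 \<le> t" for t
    proof (rule DERIV_nonneg_imp_nondecreasing[OF that])
      fix x :: real assume "1 \<le> x" "x \<le> t"
      then have "0 \<le> x" by simp
      then show "\<exists>y. (G has_real_derivative y) (at x) \<and> 0 \<le> y" using Gder gnn by blast
    qed
    then show "\<forall>\<^sub>F t in at_top. G 1 \<le> G t" by (auto simp: eventually_at_top_linorder)
  qed simp
  moreover have "G (1/2) < G 1"
  proof (rule DERIV_pos_imp_increasing[of "1/2" 1 G])
    fix x :: real assume x: "1/2 \<le> x" "x \<le> 1"
    have "0 < 1 + s*x" using x s by (auto intro: add_pos_nonneg)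
    then have "0 < g x" using x s unfolding g_def by (auto intro!: divide_pos_pos mult_pos_pos)
    then show "\<exists>y. (G has_real_derivative y) (at x) \<and> 0 < y"
      using Gder[of x] x by auto
  qed simp
  moreover have "G 0 \<le> G (1/2)" by (rule mono) simp
  ultimately show Icnn: "0 < Ic s" using Ic_eq by simp
  have "(LINT z|(lborel::complex measure). 2*(cmod z)^2/((1+(cmod z)^2)^2*(1+s*(cmod z)^2)^2))
      = (LINT z|(lborel::complex measure). (\<lambda>t. 2 * g t) ((cmod z)^2))"
    by (simp add: g_def)
  also have "\<dots> = (LINT t|lborel. (pi * indicator {0..} t) * (2 * g t))"
    by (rule integral_radial) measurable
  also have "\<dots> = enn2real (\<integral>\<^sup>+ t. ennreal ((pi * indicator {0..} t) * (2 * g t)) \<partial>lborel)"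
    by (rule integral_eq_nn_integral)
       (use s in \<open>auto intro!: AE_I2 simp: g_def indicator_def\<close>)
  also have "(\<integral>\<^sup>+ t. ennreal ((pi * indicator {0..} t) * (2 * g t)) \<partial>lborel)
      = (\<integral>\<^sup>+ t. ennreal (2*pi) * (ennreal (g t) * indicator {0..} t) \<partial>lborel)"
  proof (intro nn_integral_cong)
    fix t :: real
    show "ennreal ((pi * indicator {0..} t) * (2 * g t)) = ennreal (2*pi) * (ennreal (g t) * indicator {0..} t)"
    proof (cases "0 \<le> t")
      case True
      then have "0 \<le> g t" using s by (simp add: g_def)
      then have "ennreal (2*pi * g t) = ennreal (2*pi) * ennreal (g t)"
        by (intro ennreal_mult) auto
      then show ?thesis using True by (simp add: mult_ac)
    qed simp
  qed
  also have "\<dots> = ennreal (2*pi) * (\<integral>\<^sup>+ t. ennreal (g t) * indicator {0..} t \<partial>lborel)"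
    by (rule nn_integral_cmult) measurable
  also have "(\<integral>\<^sup>+ t. ennreal (g t) * indicator {0..} t \<partial>lborel) = ennreal ((- ((1+s)*ln s/(1-s)^3)) - G 0)"
    by (rule nn_integral_FTC_atLeast[OF gm Gder gnn Glim])
  also have "(- ((1+s)*ln s/(1-s)^3)) - G 0 = Ic s" by (rule Ic_eq)
  finally show "(LINT z|(lborel::complex measure). 2*(cmod z)^2/((1+(cmod z)^2)^2*(1+s*(cmod z)^2)^2)) = 2*pi*Ic s"
    using Icnn by (simp add: ennreal_mult'[symmetric])
qed


lemma DERIV_over_pow:
  fixes u :: "real \<Rightarrow> real"
  assumes "(u has_real_derivative u') (at s)" "s \<noteq> 1"
  shows "((\<lambda>s. u s/(1-s)^k) has_real_derivative u'/(1-s)^k + k*u s/(1-s)^(k+1)) (at s)"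
proof -
  have ne: "1 - s \<noteq> 0" using assms by auto
  have dp: "((\<lambda>s. (1-s)^k) has_real_derivative - (k * (1-s)^(k-1))) (at s)"
    by (auto intro!: derivative_eq_intros)
  have "((\<lambda>s. u s/(1-s)^k) has_real_derivative (u' * (1-s)^k - u s * (- (k * (1-s)^(k-1)))) / ((1-s)^k * (1-s)^k)) (at s)"
    by (rule DERIV_divide[OF assms(1) dp]) (use ne in simp)
  moreover have "(u' * (1-s)^k - u s * (- (k * (1-s)^(k-1)))) / ((1-s)^k * (1-s)^k) = u'/(1-s)^k + k*u s/(1-s)^(k+1)"
  proof (cases k)
    case 0 then show ?thesis using ne by simp
  next
    case (Suc m)
    define w where "w = 1 - s"
    have w: "w \<noteq> 0" using ne by (simp add: w_def)
    have "(u' * w^(Suc m) - u s * (- (Suc m * w^m))) / (w^(Suc m) * w^(Suc m)) = u'/w^(Suc m) + (Suc m)*u s/w^(Suc m+1)"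
      using w by (simp add: field_simps)
    then show ?thesis using Suc by (simp add: w_def)
  qed
  ultimately show ?thesis by simp
qed

definition Ic1 :: "real \<Rightarrow> real" where
  "Ic1 s = (- ln s - (1+s)/s)/(1-s)^3 + 3*(-(1+s)*ln s)/(1-s)^4 - 4/(1-s)^3"
definition Ic2 :: "real \<Rightarrow> real" where
  "Ic2 s = ((-1/s + 1/s^2)/(1-s)^3 + 3*(- ln s - (1+s)/s)/(1-s)^4)
     + (3*(- ln s - (1+s)/s)/(1-s)^4 + 4*(3*(-(1+s)*ln s))/(1-s)^5)
     - 3*4/(1-s)^4"

lemma DERIV_Ic: assumes "0 < s" "s < 1" shows "(Ic has_real_derivative Ic1 s) (at s)"
proof -
  have ne: "s \<noteq> 1" "s \<noteq> 0" using assms by auto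
  have u1: "((\<lambda>s. -(1+s)*ln s) has_real_derivative (- ln s - (1+s)/s)) (at s)"
    using assms by (auto intro!: derivative_eq_intros simp: field_simps)
  have a1: "((\<lambda>s. -(1+s)*ln s/(1-s)^3) has_real_derivative
     ((- ln s - (1+s)/s)/(1-s)^3 + 3*(-(1+s)*ln s)/(1-s)^(3+1))) (at s)"
    using DERIV_over_pow[OF u1 ne(1), where k=3] by simp
  have a2: "((\<lambda>s. 2/(1-s)^2) has_real_derivative (0/(1-s)^2 + 2*2/(1-s)^(2+1))) (at s)"
    using DERIV_over_pow[OF DERIV_const[of 2] ne(1), where k=2] by simp
  have "((\<lambda>s. -(1+s)*ln s/(1-s)^3 - 2/(1-s)^2) has_real_derivative
     ((- ln s - (1+s)/s)/(1-s)^3 + 3*(-(1+s)*ln s)/(1-s)^(3+1)) - (0/(1-s)^2 + 2*2/(1-s)^(2+1))) (at s)"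
    by (intro DERIV_diff a1 a2)
  then show ?thesis unfolding Ic_def Ic1_def by simp
qed

lemma DERIV_Ic1: assumes "0 < s" "s < 1" shows "(Ic1 has_real_derivative Ic2 s) (at s)"
proof -
  have ne: "s \<noteq> 1" "s \<noteq> 0" using assms by auto
  have u1: "((\<lambda>s. - ln s - (1+s)/s) has_real_derivative (-1/s + 1/s^2)) (at s)"
    using assms by (auto intro!: derivative_eq_intros simp: field_simps power2_eq_square)
  have u2: "((\<lambda>s. 3*(-(1+s)*ln s)) has_real_derivative 3*(- ln s - (1+s)/s)) (at s)"
    using assms by (auto intro!: derivative_eq_intros simp: field_simps)
  have a1: "((\<lambda>s. (- ln s - (1+s)/s)/(1-s)^3) has_real_derivative
     (-1/s + 1/s^2)/(1-s)^3 + 3*(- ln s - (1+s)/s)/(1-s)^(3+1)) (at s)"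
    using DERIV_over_pow[OF u1 ne(1), where k=3] by simp
  have a2: "((\<lambda>s. 3*(-(1+s)*ln s)/(1-s)^4) has_real_derivative
     3*(- ln s - (1+s)/s)/(1-s)^4 + 4*(3*(-(1+s)*ln s))/(1-s)^(4+1)) (at s)"
    using DERIV_over_pow[OF u2 ne(1), where k=4] by simp
  have a3: "((\<lambda>s. 4/(1-s)^3) has_real_derivative (0/(1-s)^3 + 3*4/(1-s)^(3+1))) (at s)"
    using DERIV_over_pow[OF DERIV_const[of 4] ne(1), where k=3] by simp
  have "((\<lambda>s. (- ln s - (1+s)/s)/(1-s)^3 + 3*(-(1+s)*ln s)/(1-s)^4 - 4/(1-s)^3) has_real_derivative
     ((-1/s + 1/s^2)/(1-s)^3 + 3*(- ln s - (1+s)/s)/(1-s)^(3+1))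
     + (3*(- ln s - (1+s)/s)/(1-s)^4 + 4*(3*(-(1+s)*ln s))/(1-s)^(4+1))
     - (0/(1-s)^3 + 3*4/(1-s)^(3+1))) (at s)"
    by (intro DERIV_diff DERIV_add a1 a2 a3)
  then show ?thesis unfolding Ic1_def Ic2_def by simp
qed

lemma K_tendsto: "filterlim (\<lambda>s. -2*(Ic1 s/Ic s + s*(Ic2 s*Ic s - (Ic1 s)^2)/(Ic s)^2)/(2*pi*Ic s)) at_top (at_right 0)"
  unfolding Ic_def Ic1_def Ic2_def by real_asymp


definition Num :: "complex^3 \<Rightarrow> complex^3 \<Rightarrow> complex \<Rightarrow> complex" where
  "Num x u z = (u$0*z + u$1)*(x$2*z + 1) - (x$0*z + x$1)*(u$2*z)"
definition Qf :: "complex^3 \<Rightarrow> complex \<Rightarrow> real" where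
  "Qf x z = (cmod (x$0*z + x$1))^2 + (cmod (x$2*z + 1))^2"
definition wt :: "complex^3 \<Rightarrow> complex \<Rightarrow> real" where
  "wt x z = 2 / ((1 + (cmod z)^2)^2 * (Qf x z)^2)"
definition detx :: "complex^3 \<Rightarrow> complex" where
  "detx x = x$0 - x$1*x$2"

lemma chart3: "chart 3 x = (x$0, x$1, x$2, 1)" by (simp add: chart_def)
lemma chart_var3: "chart_var 3 u = (u$0, u$1, u$2, 0)" by (simp add: chart_var_def)
lemma in_M1_3: "x \<in> chart_dom 3 \<longleftrightarrow> detx x \<noteq> 0"
  by (simp add: chart_dom_def chart3 in_M1_def detx_def)

lemma pointwise_aux:
  fixes a n m d :: real assumes "d \<noteq> 0"
  shows "2/(1+a^2)^2 * (n/d^2)^2/(1+(m/d)^2)^2 = 2/((1+a^2)^2*(m^2+d^2)^2)*n^2"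
proof -
  define e where "e = d^2"
  have e: "e \<noteq> 0" using assms by (simp add: e_def)
  have e1: "1 + (m/d)^2 = (m^2+e)/e" using e by (simp add: e_def field_simps power_divide)
  have "2/(1+a^2)^2 * (n/d^2)^2/(1+(m/d)^2)^2 = 2/(1+a^2)^2 * (n/e)^2/((m^2+e)/e)^2"
    by (simp add: e1 e_def)
  also have "\<dots> = 2/(1+a^2)^2 * (n^2/e^2)/((m^2+e)^2/e^2)"
    by (simp add: power_divide)
  also have "\<dots> = 2/(1+a^2)^2 * n^2/(m^2+e)^2"
    using e by (simp add: field_simps)
  finally show ?thesis by (simp add: e_def)
qed

lemma L2Q_eq: "L2Q 3 x u = (LINT z|lborel. wt x z * (cmod (Num x u z))^2)"
proof -
  have "L2Q 3 x u = (LINT z|lborel. 2/(1+(cmod z)^2)^2 * (cmod (Num x u z / (x$2*z+1)^2))^2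
         / (1 + (cmod ((x$0*z+x$1)/(x$2*z+1)))^2)^2)"
    unfolding L2Q_def chart3 chart_var3 Wmap_def Wdot_def Num_def by simp
  also have "\<dots> = (LINT z|lborel. wt x z * (cmod (Num x u z))^2)"
  proof (rule integral_cong_AE)
    show "(\<lambda>z. 2/(1+(cmod z)^2)^2 * (cmod (Num x u z / (x$2*z+1)^2))^2
         / (1 + (cmod ((x$0*z+x$1)/(x$2*z+1)))^2)^2) \<in> borel_measurable lborel"
      unfolding Num_def by measurable
    show "(\<lambda>z. wt x z * (cmod (Num x u z))^2) \<in> borel_measurable lborel"
      unfolding Num_def wt_def Qf_def by measurable
    show "AE z in lborel. 2/(1+(cmod z)^2)^2 * (cmod (Num x u z / (x$2*z+1)^2))^2
         / (1 + (cmod ((x$0*z+x$1)/(x$2*z+1)))^2)^2 = wt x z * (cmod (Num x u z))^2"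
      using AE_lborel_singleton[of "-1/x$2"]
    proof eventually_elim
      case (elim z)
      have D: "x$2*z + 1 \<noteq> 0"
      proof
        assume h: "x$2*z + 1 = 0"
        then have "x$2 \<noteq> 0" by auto
        with h have "z = -1/x$2" by (simp add: field_simps add_eq_0_iff)
        with elim show False by simp
      qed
      then have d: "cmod (x$2*z + 1) \<noteq> 0" by simp
      show ?case
        using pointwise_aux[OF d, of "cmod z" "cmod (Num x u z)" "cmod (x$0*z+x$1)"]
        by (simp add: norm_divide norm_power wt_def Qf_def mult.commute)
    qed
  qed
  finally show ?thesis .
qed

lemma cs_real:
  fixes a b c d :: real
  shows "(a*c + b*d)^2 \<le> (a^2+b^2)*(c^2+d^2)"
proof -
  have "(a^2+b^2)*(c^2+d^2) - (a*c+b*d)^2 = (a*d-b*c)^2" by algebra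
  moreover have "0 \<le> (a*d-b*c)^2" by simp
  ultimately show ?thesis by linarith
qed

lemma cs2:
  fixes p q A B :: complex
  shows "(cmod (p*A + q*B))^2 \<le> ((cmod p)^2 + (cmod q)^2) * ((cmod A)^2 + (cmod B)^2)"
proof -
  have "cmod (p*A + q*B) \<le> cmod p * cmod A + cmod q * cmod B"
    by (metis norm_mult norm_triangle_ineq)
  then have "(cmod (p*A + q*B))^2 \<le> (cmod p * cmod A + cmod q * cmod B)^2"
    by (simp add: power_mono)
  also have "\<dots> \<le> ((cmod p)^2 + (cmod q)^2) * ((cmod A)^2 + (cmod B)^2)"
    by (rule cs_real)
  finally show ?thesis .
qed

lemma Qf_lower:
  "(cmod (detx x))^2 * (1 + (cmod z)^2) \<le> (1 + (cmod (x$0))^2 + (cmod (x$1))^2 + (cmod (x$2))^2) * Qf x z"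
proof -
  define M where "M = x$0*z + x$1"
  define D where "D = x$2*z + 1"
  have e1: "detx x * z = 1*M + (-x$1)*D" by (simp add: detx_def M_def D_def algebra_simps)
  have e2: "detx x = (-x$2)*M + x$0*D" by (simp add: detx_def M_def D_def algebra_simps)
  have "(cmod (detx x))^2 * (cmod z)^2 = (cmod (detx x * z))^2" by (simp add: norm_mult power_mult_distrib)
  also have "\<dots> \<le> ((cmod 1)^2 + (cmod (-x$1))^2) * ((cmod M)^2 + (cmod D)^2)"
    unfolding e1 by (rule cs2)
  finally have i1: "(cmod (detx x))^2 * (cmod z)^2 \<le> (1 + (cmod (x$1))^2) * Qf x z"
    by (simp add: Qf_def M_def D_def)
  have "(cmod (detx x))^2 \<le> ((cmod (-x$2))^2 + (cmod (x$0))^2) * ((cmod M)^2 + (cmod D)^2)"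
    by (subst e2) (rule cs2)
  then have i2: "(cmod (detx x))^2 \<le> ((cmod (x$2))^2 + (cmod (x$0))^2) * Qf x z"
    by (simp add: Qf_def M_def D_def)
  show ?thesis using i1 i2 by (simp add: algebra_simps)
qed

definition cx :: "complex^3 \<Rightarrow> real" where
  "cx x = (cmod (detx x))^2 / (1 + (cmod (x$0))^2 + (cmod (x$1))^2 + (cmod (x$2))^2)"

lemma pos4: "0 < 1 + (a::real)^2 + b^2 + c^2"
  using zero_le_power2[of a] zero_le_power2[of b] zero_le_power2[of c] by linarith

lemma cx_pos: "detx x \<noteq> 0 \<Longrightarrow> 0 < cx x"
  unfolding cx_def by (intro divide_pos_pos pos4) auto

lemma Qf_lower': "cx x * (1 + (cmod z)^2) \<le> Qf x z"
proof -
  have pos: "0 < 1 + (cmod (x$0))^2 + (cmod (x$1))^2 + (cmod (x$2))^2" by (rule pos4)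
  show ?thesis using Qf_lower[of x z] pos unfolding cx_def
    by (simp add: divide_le_eq mult.commute mult.left_commute)
qed

definition Kn :: "complex^3 \<Rightarrow> complex^3 \<Rightarrow> real" where
  "Kn x u = (cmod (u$0) + cmod (u$1))*(cmod (x$2) + 1) + (cmod (x$0) + cmod (x$1))*cmod (u$2)"

lemma poly_bound_aux:
  fixes A B C E F G r :: real
  assumes "0 \<le> A" "0 \<le> B" "0 \<le> C" "0 \<le> E" "0 \<le> F" "0 \<le> G" "0 \<le> r"
  shows "(A*r + B)*(C*r + 1) + (E*r + F)*(G*r) \<le> ((A+B)*(C+1) + (E+F)*G) * (1 + r^2)"
proof -
  have r1: "r \<le> 1 + r^2"
  proof -
    have "0 \<le> (r - 1/2)^2" by simp
    then show ?thesis by (simp add: power2_eq_square algebra_simps)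
  qed
  have r2: "r^2 \<le> 1 + r^2" "1 \<le> 1 + r^2" by simp_all
  have "(A*r + B)*(C*r + 1) + (E*r + F)*(G*r) = (A*C + E*G)*r^2 + (A + B*C + F*G)*r + B"
    by (simp add: algebra_simps power2_eq_square)
  also have "\<dots> \<le> (A*C + E*G)*(1+r^2) + (A + B*C + F*G)*(1+r^2) + B*(1+r^2)"
  proof -
    have "(A*C + E*G)*r^2 \<le> (A*C + E*G)*(1+r^2)"
      by (rule mult_left_mono[OF r2(1)]) (use assms in simp)
    moreover have "(A + B*C + F*G)*r \<le> (A + B*C + F*G)*(1+r^2)"
      by (rule mult_left_mono[OF r1]) (use assms in simp)
    moreover have "B \<le> B*(1+r^2)"
      using mult_left_mono[OF r2(2), of B] assms by simp
    ultimately show ?thesis by linarith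
  qed
  also have "\<dots> = ((A+B)*(C+1) + (E+F)*G) * (1 + r^2)" by (simp add: algebra_simps)
  finally show ?thesis .
qed

lemma Num_bound: "cmod (Num x u z) \<le> Kn x u * (1 + (cmod z)^2)"
proof -
  have "cmod (Num x u z) \<le> cmod ((u$0*z + u$1) * (x$2*z + 1)) + cmod ((x$0*z + x$1) * (u$2*z))"
    unfolding Num_def by (rule norm_triangle_ineq4)
  also have "\<dots> = cmod (u$0*z + u$1) * cmod (x$2*z + 1) + cmod (x$0*z + x$1) * cmod (u$2*z)"
    by (simp only: norm_mult)
  also have "\<dots> \<le> (cmod (u$0) * cmod z + cmod (u$1)) * (cmod (x$2) * cmod z + 1) + (cmod (x$0) * cmod z + cmod (x$1)) * (cmod (u$2) * cmod z)"
  proof -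
    have a: "cmod (u$0*z + u$1) \<le> cmod (u$0) * cmod z + cmod (u$1)"
      using norm_triangle_ineq[of "u$0*z" "u$1"] by (simp only: norm_mult)
    have b: "cmod (x$2*z + 1) \<le> cmod (x$2) * cmod z + 1"
      using norm_triangle_ineq[of "x$2*z" 1] by (simp only: norm_mult norm_one)
    have c: "cmod (x$0*z + x$1) \<le> cmod (x$0) * cmod z + cmod (x$1)"
      using norm_triangle_ineq[of "x$0*z" "x$1"] by (simp only: norm_mult)
    have d: "cmod (u$2*z) = cmod (u$2) * cmod z" by (simp only: norm_mult)
    have "cmod (u$0*z + u$1) * cmod (x$2*z + 1) \<le> (cmod (u$0) * cmod z + cmod (u$1)) * (cmod (x$2) * cmod z + 1)"
      by (rule mult_mono[OF a b]) simp_all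
    moreover have "cmod (x$0*z + x$1) * cmod (u$2*z) \<le> (cmod (x$0) * cmod z + cmod (x$1)) * (cmod (u$2) * cmod z)"
      unfolding d by (rule mult_right_mono[OF c]) simp
    ultimately show ?thesis by (rule add_mono)
  qed
  also have "\<dots> \<le> Kn x u * (1 + (cmod z)^2)"
    unfolding Kn_def by (rule poly_bound_aux) simp_all
  finally show ?thesis .
qed


lemma bound_aux:
  fixes R Q c B K :: real
  assumes R: "1 \<le> R" and c: "0 < c" and Q: "c*R \<le> Q" and B: "\<bar>B\<bar> \<le> K*R^2"
  shows "\<bar>2/(R^2*Q^2)*B\<bar> \<le> 2*K/c^2*(1/R^2)"
proof -
  have R0: "0 < R" using R by simp
  have cR: "0 < c*R" using R0 c by simp
  have Q0: "0 < Q" using cR Q by simp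
  have K0: "0 \<le> K" using B R0 by (smt (verit) zero_less_power zero_le_mult_iff abs_ge_zero)
  have "\<bar>2/(R^2*Q^2)*B\<bar> = 2*\<bar>B\<bar>/(R^2*Q^2)" using Q0 R0 by (simp add: abs_mult)
  also have "\<dots> \<le> 2*(K*R^2)/(R^2*Q^2)"
    by (intro divide_right_mono mult_left_mono B) simp_all
  also have "\<dots> = 2*K/Q^2" using R0 by (simp add: field_simps)
  also have "\<dots> \<le> 2*K/(c*R)^2"
  proof (rule divide_left_mono)
    show "(c*R)^2 \<le> Q^2" using cR Q by (intro power_mono) simp_all
    show "0 \<le> 2*K" using K0 by simp
    show "0 < Q^2 * (c*R)^2" using mult_pos_pos[OF zero_less_power[OF Q0] zero_less_power[OF cR]] .
  qed
  also have "\<dots> = 2*K/c^2*(1/R^2)" by (simp add: power_mult_distrib)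
  finally show ?thesis .
qed

lemma cnj_measurable[measurable (raw)]:
  "f \<in> borel_measurable M \<Longrightarrow> (\<lambda>x. cnj (f x :: complex)) \<in> borel_measurable M"
proof -
  have "(cnj :: complex \<Rightarrow> complex) \<in> borel_measurable borel"
    by (rule borel_measurable_continuous_onI) (intro continuous_intros)
  moreover assume "f \<in> borel_measurable M"
  ultimately show ?thesis using measurable_compose by blast
qed

lemma Kn_nonneg: "0 \<le> Kn x u" unfolding Kn_def by simp

definition Bil :: "complex^3 \<Rightarrow> complex^3 \<Rightarrow> complex^3 \<Rightarrow> complex \<Rightarrow> real" where
  "Bil x u v z = wt x z * Re (Num x u z * cnj (Num x v z))"

lemma Bil_bound:
  assumes "detx x \<noteq> 0"
  shows "\<bar>Bil x u v z\<bar> \<le> 2*(Kn x u * Kn x v)/(cx x)^2 * (1/(1+(cmod z)^2)^2)"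
proof -
  have "\<bar>Re (Num x u z * cnj (Num x v z))\<bar> \<le> cmod (Num x u z * cnj (Num x v z))"
    by (rule abs_Re_le_cmod)
  also have "\<dots> = cmod (Num x u z) * cmod (Num x v z)" by (simp add: norm_mult)
  also have "\<dots> \<le> (Kn x u * (1 + (cmod z)^2)) * (Kn x v * (1 + (cmod z)^2))"
    by (intro mult_mono Num_bound) (auto intro: order.trans[OF norm_ge_zero Num_bound])
  also have "\<dots> = (Kn x u * Kn x v) * (1 + (cmod z)^2)^2" by (simp add: power2_eq_square)
  finally have B: "\<bar>Re (Num x u z * cnj (Num x v z))\<bar> \<le> (Kn x u * Kn x v) * (1 + (cmod z)^2)^2" .
  have "\<bar>2/((1 + (cmod z)^2)^2*(Qf x z)^2) * Re (Num x u z * cnj (Num x v z))\<bar> \<le> 2*(Kn x u * Kn x v)/(cx x)^2*(1/(1 + (cmod z)^2)^2)"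
    by (rule bound_aux[OF _ cx_pos[OF assms] Qf_lower' B]) simp
  then show ?thesis by (simp add: Bil_def wt_def)
qed

lemma Bil_measurable[measurable]: "(\<lambda>z. Bil x u v z) \<in> borel_measurable borel"
  unfolding Bil_def wt_def Qf_def Num_def by measurable

lemma integrable_Bil:
  assumes "detx x \<noteq> 0"
  shows "integrable lborel (\<lambda>z. Bil x u v z)"
proof (rule Bochner_Integration.integrable_bound)
  show "integrable lborel (\<lambda>z::complex. 2*(Kn x u * Kn x v)/(cx x)^2 * (1/(1+(cmod z)^2)^2))"
    using integrable_w0 by (rule integrable_mult_right)
  show "(\<lambda>z. Bil x u v z) \<in> borel_measurable lborel" by measurable
  have K: "0 \<le> 2*(Kn x u * Kn x v)/(cx x)^2" unfolding Kn_def by simp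
  show "AE z in lborel. norm (Bil x u v z) \<le> norm (2*(Kn x u * Kn x v)/(cx x)^2 * (1/(1+(cmod z)^2)^2))"
    using Bil_bound[OF assms, of u v] K by (auto intro!: AE_I2 simp: abs_mult Kn_nonneg)
qed

lemma cmod_sq_Re: "(cmod w)^2 = Re (w * cnj w)"
proof -
  have "Re (w * cnj w) = (Re w)^2 + (Im w)^2" by (simp add: power2_eq_square)
  then show ?thesis by (simp add: cmod_power2)
qed

lemma L2Q_Bil: "L2Q 3 x u = (LINT z|lborel. Bil x u u z)"
  unfolding L2Q_eq Bil_def cmod_sq_Re ..

lemma Num_add: "Num x (u + v) z = Num x u z + Num x v z"
  by (simp add: Num_def algebra_simps)
lemma Num_diff: "Num x (u - v) z = Num x u z - Num x v z"
  by (simp add: Num_def algebra_simps)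
lemma Num_scaleR: "Num x (c *\<^sub>R u) z = of_real c * Num x u z"
  unfolding Num_def vector_scaleR_component by (simp add: scaleR_conv_of_real algebra_simps)

lemma Bil_polar: "(Bil x (u+v) (u+v) z - Bil x (u-v) (u-v) z)/4 = Bil x u v z"
proof -
  have "Re ((a+b)*cnj(a+b)) - Re ((a-b)*cnj(a-b)) = 4 * Re (a * cnj b)" for a b :: complex
    by (simp add: algebra_simps)
  then show ?thesis unfolding Bil_def Num_add Num_diff by (simp add: algebra_simps)
qed

lemma gam_eq:
  assumes "detx x \<noteq> 0"
  shows "gam 3 x u v = (LINT z|lborel. Bil x u v z)"
proof -
  have "gam 3 x u v = ((LINT z|lborel. Bil x (u+v) (u+v) z) - (LINT z|lborel. Bil x (u-v) (u-v) z))/4"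
    unfolding gam_def L2Q_Bil ..
  also have "\<dots> = (LINT z|lborel. (Bil x (u+v) (u+v) z - Bil x (u-v) (u-v) z)/4)"
    using integrable_Bil[OF assms] by simp
  also have "\<dots> = (LINT z|lborel. Bil x u v z)"
    unfolding Bil_polar ..
  finally show ?thesis .
qed

lemma gam_diff_left:
  assumes "detx x \<noteq> 0"
  shows "gam 3 x (v - w) Z = gam 3 x v Z - gam 3 x w Z"
proof -
  have "Bil x (v - w) Z z = Bil x v Z z - Bil x w Z z" for z
    unfolding Bil_def Num_diff by (simp add: algebra_simps)
  then show ?thesis
    using integrable_Bil[OF assms] by (simp add: gam_eq[OF assms])
qed


lemma AE_ex_complex:
  assumes "AE z in (lborel::complex measure). P z" shows "\<exists>z. P z"
proof (rule ccontr)
  assume "\<not> (\<exists>z. P z)"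
  then have "AE z in (lborel::complex measure). False" using assms by simp
  then have "ae_filter (lborel::complex measure) = bot" using trivial_limit_def by blast
  then have "emeasure (lborel::complex measure) (space lborel) = 0" by (simp add: ae_filter_eq_bot_iff)
  then show False by simp
qed

lemma AE_ex_distinct3:
  assumes "AE z in (lborel::complex measure). P z"
  shows "\<exists>a b c. P a \<and> P b \<and> P c \<and> a \<noteq> b \<and> a \<noteq> c \<and> b \<noteq> c"
proof -
  obtain a where a: "P a" using AE_ex_complex[OF assms] by blast
  have "AE z in (lborel::complex measure). P z \<and> z \<noteq> a"
    using assms AE_lborel_singleton[of a] by eventually_elim auto
  then obtain b where b: "P b" "b \<noteq> a" using AE_ex_complex by blast
  have "AE z in (lborel::complex measure). P z \<and> z \<noteq> a \<and> z \<noteq> b"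
    using assms AE_lborel_singleton[of a] AE_lborel_singleton[of b] by eventually_elim auto
  then obtain c where c: "P c" "c \<noteq> a" "c \<noteq> b" using AE_ex_complex by blast
  show ?thesis using a b c by blast
qed

lemma quad3:
  fixes A B C z1 z2 z3 :: complex
  assumes d: "z1 \<noteq> z2" "z1 \<noteq> z3" "z2 \<noteq> z3"
    and r: "A*z1^2 + B*z1 + C = 0" "A*z2^2 + B*z2 + C = 0" "A*z3^2 + B*z3 + C = 0"
  shows "A = 0 \<and> B = 0 \<and> C = 0"
proof -
  have "(z1 - z2) * (A*(z1+z2) + B) = (A*z1^2 + B*z1 + C) - (A*z2^2 + B*z2 + C)"
    by (simp add: algebra_simps power2_eq_square)
  then have "(z1 - z2) * (A*(z1+z2) + B) = 0" using r by simp
  then have e1: "A*(z1+z2) + B = 0" using d by simp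
  have "(z1 - z3) * (A*(z1+z3) + B) = (A*z1^2 + B*z1 + C) - (A*z3^2 + B*z3 + C)"
    by (simp add: algebra_simps power2_eq_square)
  then have "(z1 - z3) * (A*(z1+z3) + B) = 0" using r by simp
  then have e2: "A*(z1+z3) + B = 0" using d by simp
  have "A * (z2 - z3) = (A*(z1+z2) + B) - (A*(z1+z3) + B)" by (simp add: algebra_simps)
  then have "A * (z2 - z3) = 0" using e1 e2 by simp
  then have A: "A = 0" using d by simp
  then have B: "B = 0" using e1 by simp
  then have "C = 0" using r(1) A by simp
  with A B show ?thesis by simp
qed

lemma Num_poly: "Num x w z = (w$0*x$2 - x$0*w$2)*z^2 + (w$0 + w$1*x$2 - x$1*w$2)*z + w$1"
  by (simp add: Num_def algebra_simps power2_eq_square)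

lemma Qf_pos: "detx x \<noteq> 0 \<Longrightarrow> 0 < Qf x z"
  using Qf_lower'[of x z] cx_pos[of x]
  by (smt (verit) mult_pos_pos zero_le_power2)

lemma wt_pos: "detx x \<noteq> 0 \<Longrightarrow> 0 < wt x z"
proof -
  assume "detx x \<noteq> 0"
  then have q: "0 < Qf x z" by (rule Qf_pos)
  have r: "0 < 1 + (cmod z)^2" by (simp add: add_pos_nonneg)
  show ?thesis unfolding wt_def
    by (intro divide_pos_pos mult_pos_pos zero_less_power q r) simp
qed

lemma vec3_eqI:
  fixes v w :: "'a^3"
  assumes "v$0 = w$0" "v$1 = w$1" "v$2 = w$2"
  shows "v = w"
proof -
  have "v$i = w$i" for i :: 3
  proof -
    have "i = 0 \<or> i = 1 \<or> i = 2" using exhaust_3[of i] by auto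
    then show ?thesis using assms by auto
  qed
  then show ?thesis by (simp add: vec_eq_iff)
qed

lemma gam_nondeg:
  assumes dx: "detx x \<noteq> 0" and g0: "gam 3 x w w = 0"
  shows "w = 0"
proof -
  have int: "integrable lborel (\<lambda>z. Bil x w w z)" by (rule integrable_Bil[OF dx])
  have nn: "AE z in lborel. 0 \<le> Bil x w w z"
    using wt_pos[OF dx] by (auto intro!: AE_I2 simp: Bil_def cmod_sq_Re[symmetric] less_imp_le)
  have "(LINT z|lborel. Bil x w w z) = 0" using g0 gam_eq[OF dx] by simp
  then have "AE z in lborel. Bil x w w z = 0"
    using integral_nonneg_eq_0_iff_AE[OF int nn] by simp
  then have "AE z in lborel. Num x w z = 0"
  proof eventually_elim
    case (elim z)
    then have "wt x z * (cmod (Num x w z))^2 = 0" by (simp add: Bil_def cmod_sq_Re)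
    then show ?case using wt_pos[OF dx, of z] by simp
  qed
  then obtain z1 z2 z3 where zs: "Num x w z1 = 0" "Num x w z2 = 0" "Num x w z3 = 0"
    "z1 \<noteq> z2" "z1 \<noteq> z3" "z2 \<noteq> z3"
    using AE_ex_distinct3 by blast
  have c: "w$0*x$2 - x$0*w$2 = 0 \<and> w$0 + w$1*x$2 - x$1*w$2 = 0 \<and> w$1 = 0"
    by (rule quad3[OF zs(4-6)]) (use zs(1-3) in \<open>simp_all add: Num_poly\<close>)
  then have w1: "w$1 = 0" and "w$0 + w$1*x$2 - x$1*w$2 = 0" by auto
  then have w0: "w$0 = x$1*w$2" by (simp add: right_minus_eq)
  have "detx x * w$2 = -(w$0*x$2 - x$0*w$2)" by (simp add: detx_def w0 algebra_simps)
  also have "\<dots> = 0" using c by simp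
  finally have "detx x * w$2 = 0" .
  then have w2: "w$2 = 0" using dx by simp
  show ?thesis by (rule vec3_eqI) (simp_all add: w0 w1 w2)
qed

lemma gam_unique:
  assumes dx: "detx x \<noteq> 0" and eq: "\<And>Z. gam 3 x v Z = gam 3 x w Z"
  shows "v = w"
proof -
  have "gam 3 x (v - w) (v - w) = 0" using gam_diff_left[OF dx] eq by simp
  then have "v - w = 0" by (rule gam_nondeg[OF dx])
  then show ?thesis by simp
qed


definition F :: "real \<Rightarrow> real" where "F s = 2*pi*Ic s"
definition F1 :: "real \<Rightarrow> real" where "F1 s = 2*pi*Ic1 s"
definition F2 :: "real \<Rightarrow> real" where "F2 s = 2*pi*Ic2 s"

definition e0v :: "complex \<Rightarrow> complex^3" where
  "e0v c = (\<chi> i. if i = 0 then c else 0)"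

lemma e0v_comp[simp]: "e0v c $ 0 = c" "e0v c $ 1 = 0" "e0v c $ 2 = 0"
  by (simp_all add: e0v_def)

lemma Re_mult_of_real_right: "Re (c * of_real r) = Re c * r"
  by simp

lemma Re_mult_cnj_scale: "Re (a*w*cnj(b*w)) = Re (a*cnj b) * (cmod w)^2"
proof -
  have "a*w*cnj(b*w) = (a*cnj b) * (w*cnj w)" by (simp add: algebra_simps)
  also have "w*cnj w = of_real ((cmod w)^2)" by (metis complex_norm_square)
  finally have "a*w*cnj(b*w) = (a*cnj b) * of_real ((cmod w)^2)" .
  then show ?thesis by (simp only: Re_mult_of_real_right)
qed

lemma Qf_curve: "x$1 = 0 \<Longrightarrow> x$2 = 0 \<Longrightarrow> Qf x z = 1 + (cmod (x$0))^2 * (cmod z)^2"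
  by (simp add: Qf_def norm_mult power_mult_distrib)

lemma wt_curve: "x$1 = 0 \<Longrightarrow> x$2 = 0 \<Longrightarrow> wt x z = 2/((1+(cmod z)^2)^2 * (1 + (cmod (x$0))^2 * (cmod z)^2)^2)"
  by (simp add: wt_def Qf_curve)

lemma detx_curve: "x$1 = 0 \<Longrightarrow> x$2 = 0 \<Longrightarrow> detx x = x$0"
  by (simp add: detx_def)

lemma Fint_curve:
  assumes x: "x$1 = 0" "x$2 = 0" and s: "0 < (cmod (x$0))^2" "(cmod (x$0))^2 < 1"
  shows "(LINT z|lborel. wt x z * (cmod z)^2) = F ((cmod (x$0))^2)"
proof -
  have "(LINT z|lborel. wt x z * (cmod z)^2)
     = (LINT z|(lborel::complex measure). 2*(cmod z)^2/((1+(cmod z)^2)^2*(1+(cmod (x$0))^2*(cmod z)^2)^2))"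
    by (rule Bochner_Integration.integral_cong) (simp_all add: wt_curve[OF x])
  also have "\<dots> = F ((cmod (x$0))^2)"
    unfolding F_def by (rule Fint_closed(1)[OF s])
  finally show ?thesis .
qed

lemma gam_curve:
  assumes x: "x$1 = 0" "x$2 = 0" and s: "0 < (cmod (x$0))^2" "(cmod (x$0))^2 < 1"
    and u: "u$1 = 0" "u$2 = 0"
  shows "gam 3 x u v = F ((cmod (x$0))^2) * Re (u$0 * cnj (v$0))"
proof -
  have dx: "detx x \<noteq> 0" using s by (simp add: detx_curve[OF x])
  define e where "e = e0v 1"
  define oddp where "oddp z = wt x z * Re (u$0 * z * cnj (v$1 - x$0 * v$2 * z^2))" for z
  have Bee: "Bil x e e z = wt x z * (cmod z)^2" for z
    by (simp add: Bil_def Num_def e_def x cmod_sq_Re)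
  have Buv: "Bil x u v z = Re (u$0 * cnj (v$0)) * Bil x e e z + oddp z" for z
  proof -
    define R where "R = v$1 - x$0 * v$2 * z^2"
    have nu: "Num x u z = u$0 * z" by (simp add: Num_def x u)
    have nv: "Num x v z = v$0 * z + R"
      by (simp add: Num_def x algebra_simps power2_eq_square R_def)
    have "Re (Num x u z * cnj (Num x v z)) = Re (u$0 * z * cnj (v$0 * z)) + Re (u$0 * z * cnj R)"
      unfolding nu nv by (simp only: complex_cnj_add distrib_left plus_complex.sel)
    also have "Re (u$0 * z * cnj (v$0 * z)) = Re (u$0 * cnj (v$0)) * (cmod z)^2"
      by (rule Re_mult_cnj_scale)
    finally have h: "Re (Num x u z * cnj (Num x v z)) = Re (u$0 * cnj (v$0)) * (cmod z)^2 + Re (u$0 * z * cnj (v$1 - x$0 * v$2 * z^2))"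
      by (simp only: R_def)
    show ?thesis unfolding Bee unfolding Bil_def oddp_def h by algebra
  qed
  have int_e: "integrable lborel (\<lambda>z. Bil x e e z)" by (rule integrable_Bil[OF dx])
  have int_oddp: "integrable lborel oddp"
  proof -
    have "oddp = (\<lambda>z. Bil x u v z - Re (u$0 * cnj (v$0)) * Bil x e e z)"
      using Buv by (auto simp: fun_eq_iff)
    then show ?thesis using integrable_Bil[OF dx] by simp
  qed
  have oddp_meas: "oddp \<in> borel_measurable borel"
    unfolding oddp_def wt_def Qf_def by measurable
  have oddp0: "(LINT z|lborel. oddp z) = 0"
  proof (rule integral_odd_complex[OF oddp_meas])
    fix z :: complex
    have w: "wt x (-z) = wt x z" by (simp add: wt_curve[OF x])
    have h: "u$0 * (-z) * cnj (v$1 - x$0 * v$2 * (-z)^2) = - (u$0 * z * cnj (v$1 - x$0 * v$2 * z^2))" by simp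
    show "oddp (-z) = - oddp z" unfolding oddp_def unfolding h unfolding w uminus_complex.sel mult_minus_right ..
  qed
  have "gam 3 x u v = (LINT z|lborel. Re (u$0 * cnj (v$0)) * Bil x e e z + oddp z)"
    by (simp add: gam_eq[OF dx] Buv)
  also have "\<dots> = Re (u$0 * cnj (v$0)) * (LINT z|lborel. Bil x e e z) + (LINT z|lborel. oddp z)"
    using int_e int_oddp by simp
  also have "(LINT z|lborel. Bil x e e z) = F ((cmod (x$0))^2)"
    unfolding Bee by (rule Fint_curve[OF x s])
  finally show ?thesis using oddp0 by simp
qed

definition Hf :: "complex^3 \<Rightarrow> real" where
  "Hf y = (LINT z|lborel. wt y z * (cmod z)^2 * (cmod (y$2*z + 1))^2)"

lemma gam_tan:
  assumes dy: "detx y \<noteq> 0" and X: "X$1 = 0" "X$2 = 0" and Y: "Y$1 = 0" "Y$2 = 0"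
  shows "gam 3 y X Y = Re (X$0 * cnj (Y$0)) * Hf y"
proof -
  have "Bil y X Y z = Re (X$0 * cnj (Y$0)) * (wt y z * (cmod z)^2 * (cmod (y$2*z + 1))^2)" for z
  proof -
    define W where "W = z * (y$2*z+1)"
    have "Num y X z = X$0 * W" "Num y Y z = Y$0 * W"
      by (simp_all add: Num_def X Y algebra_simps W_def)
    then have "Re (Num y X z * cnj (Num y Y z)) = Re (X$0 * cnj (Y$0)) * (cmod W)^2"
      by (simp only: Re_mult_cnj_scale)
    also have "(cmod W)^2 = (cmod z)^2 * (cmod (y$2*z + 1))^2"
      unfolding W_def by (simp only: norm_mult power_mult_distrib)
    finally show ?thesis by (simp add: Bil_def)
  qed
  then show ?thesis by (simp add: gam_eq[OF dy] Hf_def)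
qed

lemma Hf_curve:
  assumes x: "x$1 = 0" "x$2 = 0" and s: "0 < (cmod (x$0))^2" "(cmod (x$0))^2 < 1"
  shows "Hf x = F ((cmod (x$0))^2)"
  unfolding Hf_def using Fint_curve[OF x s] by (simp add: x)


lemma mvt_abs_bound:
  fixes \<phi> \<phi>' :: "real \<Rightarrow> real"
  assumes d: "0 < d" and h: "\<bar>h\<bar> < d"
    and der: "\<And>t. \<bar>t\<bar> < d \<Longrightarrow> (\<phi> has_real_derivative \<phi>' t) (at t)"
    and bnd: "\<And>t. \<bar>t\<bar> < d \<Longrightarrow> \<bar>\<phi>' t\<bar> \<le> G"
  shows "\<bar>\<phi> h - \<phi> 0\<bar> \<le> G * \<bar>h\<bar>"
proof (cases "h = 0")
  case True then show ?thesis by simp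
next
  case False
  show ?thesis
  proof (cases "0 < h")
    case True
    obtain \<xi> where \<xi>: "0 < \<xi>" "\<xi> < h" "\<phi> h - \<phi> 0 = (h - 0) * \<phi>' \<xi>"
      using MVT2[of 0 h \<phi> \<phi>'] True der h by (smt (verit))
    have "\<bar>\<phi>' \<xi>\<bar> \<le> G" using bnd \<xi> h by simp
    then show ?thesis using \<xi> True by (simp add: abs_mult mult.commute mult_left_mono)
  next
    case False
    with \<open>h \<noteq> 0\<close> have hn: "h < 0" by simp
    obtain \<xi> where \<xi>: "h < \<xi>" "\<xi> < 0" "\<phi> 0 - \<phi> h = (0 - h) * \<phi>' \<xi>"
      using MVT2[of h 0 \<phi> \<phi>'] hn der h by (smt (verit))
    have "\<bar>\<phi>' \<xi>\<bar> \<le> G" using bnd \<xi> h by simp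
    then show ?thesis using \<xi> hn by (simp add: abs_mult mult.commute mult_left_mono abs_minus_commute)
  qed
qed

lemma DERIV_integral_param:
  fixes f f' :: "real \<Rightarrow> 'a \<Rightarrow> real" and g :: "'a \<Rightarrow> real" and M :: "'a measure"
  assumes d: "0 < d"
    and meas: "\<And>t. f t \<in> borel_measurable M"
    and f'meas: "f' 0 \<in> borel_measurable M"
    and int0: "integrable M (f 0)"
    and der: "\<And>t z. \<bar>t\<bar> < d \<Longrightarrow> ((\<lambda>t. f t z) has_real_derivative f' t z) (at t)"
    and bnd: "\<And>t z. \<bar>t\<bar> < d \<Longrightarrow> \<bar>f' t z\<bar> \<le> g z"
    and g: "integrable M g"
  shows "((\<lambda>t. LINT z|M. f t z) has_real_derivative (LINT z|M. f' 0 z)) (at 0)"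
proof -
  have mvt: "\<bar>f h z - f 0 z\<bar> \<le> g z * \<bar>h\<bar>" if "\<bar>h\<bar> < d" for h z
    by (rule mvt_abs_bound[OF d that, of "\<lambda>t. f t z" "\<lambda>t. f' t z"]) (use der bnd in auto)
  define q where "q h z = (f h z - f 0 z) / h" for h z
  have qm: "q h \<in> borel_measurable M" for h unfolding q_def using meas by measurable
  have qb: "\<bar>q h z\<bar> \<le> g z" if "\<bar>h\<bar> < d" "h \<noteq> 0" for h z
    using mvt[OF that(1), of z] that(2) by (simp add: q_def abs_divide divide_le_eq)
  have intq: "integrable M (q h)" if "\<bar>h\<bar> < d" "h \<noteq> 0" for h
    by (rule Bochner_Integration.integrable_bound[OF g qm]) (use qb[OF that] in \<open>auto intro!: AE_I2 intro: order.trans[OF _ abs_ge_self]\<close>)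
  have intf: "integrable M (f h)" if "\<bar>h\<bar> < d" "h \<noteq> 0" for h
  proof -
    have "f h = (\<lambda>z. f 0 z + h * q h z)" using that by (auto simp: q_def fun_eq_iff)
    then show ?thesis using intq[OF that] int0 by simp
  qed
  have quot: "((LINT z|M. f h z) - (LINT z|M. f 0 z)) / (h - 0) = (LINT z|M. q h z)"
    if "\<bar>h\<bar> < d" "h \<noteq> 0" for h
    using intf[OF that] int0 by (simp add: q_def)
  show ?thesis
    unfolding has_field_derivative_iff tendsto_at_iff_sequentially
  proof (intro allI impI)
    fix X :: "nat \<Rightarrow> real"
    assume X0: "\<forall>i. X i \<in> UNIV - {0}" and X: "X \<longlonglongrightarrow> 0"
    obtain N where N: "\<And>n. N \<le> n \<Longrightarrow> \<bar>X n\<bar> < d"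
      using X d unfolding LIMSEQ_def by (auto simp: dist_real_def)
    have lim_q: "(\<lambda>n. q (X (n + N)) z) \<longlonglongrightarrow> f' 0 z" for z
    proof -
      have L1: "((\<lambda>y. (f y z - f 0 z) / y) \<longlongrightarrow> f' 0 z) (at 0)"
        using der[of 0 z] d unfolding has_field_derivative_iff by simp
      have L2: "filterlim (\<lambda>n. X (n + N)) (at 0) sequentially"
        by (rule filterlim_atI) (use X0 LIMSEQ_ignore_initial_segment[OF X, of N] in auto)
      from filterlim_compose[OF L1 L2] show ?thesis by (simp add: q_def)
    qed
    have "(\<lambda>n. LINT z|M. q (X (n + N)) z) \<longlonglongrightarrow> (LINT z|M. f' 0 z)"
    proof (rule integral_dominated_convergence[where w=g])
      show "f' 0 \<in> borel_measurable M" by (rule f'meas)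
      show "(\<lambda>z. q (X (n + N)) z) \<in> borel_measurable M" for n using qm by simp
      show "integrable M g" by (rule g)
      show "AE z in M. (\<lambda>n. q (X (n + N)) z) \<longlonglongrightarrow> f' 0 z" using lim_q by simp
      show "AE z in M. norm (q (X (n + N)) z) \<le> g z" for n
        using qb[OF N[of "n+N"]] X0 by auto
    qed
    moreover have "(\<lambda>n. LINT z|M. q (X (n + N)) z) = (\<lambda>n. ((LINT z|M. f (X (n+N)) z) - (LINT z|M. f 0 z)) / (X (n+N) - 0))"
      using quot N X0 by (auto simp: fun_eq_iff)
    ultimately have "(\<lambda>n. ((LINT z|M. f (X (n+N)) z) - (LINT z|M. f 0 z)) / (X (n+N) - 0)) \<longlonglongrightarrow> (LINT z|M. f' 0 z)"
      by simp
    then show "((\<lambda>y. ((LINT z|M. f y z) - (LINT z|M. f 0 z)) / (y - 0)) \<circ> X) \<longlonglongrightarrow> (LINT z|M. f' 0 z)"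
      unfolding comp_def by (rule LIMSEQ_offset)
  qed
qed


definition rN :: "real \<Rightarrow> real \<Rightarrow> real \<Rightarrow> real" where
  "rN G1 H1 t = (1+t*G1)^2 + (t*H1)^2"
definition rD :: "real \<Rightarrow> real \<Rightarrow> real \<Rightarrow> real \<Rightarrow> real \<Rightarrow> real \<Rightarrow> real \<Rightarrow> real" where
  "rD A0 B0 A1 B1 G1 H1 t = (A0+t*A1)^2 + (B0+t*B1)^2 + rN G1 H1 t"
definition rN' :: "real \<Rightarrow> real \<Rightarrow> real \<Rightarrow> real" where
  "rN' G1 H1 t = 2*(1+t*G1)*G1 + 2*(t*H1)*H1"
definition rD' :: "real \<Rightarrow> real \<Rightarrow> real \<Rightarrow> real \<Rightarrow> real \<Rightarrow> real \<Rightarrow> real \<Rightarrow> real" where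
  "rD' A0 B0 A1 B1 G1 H1 t = 2*(A0+t*A1)*A1 + 2*(B0+t*B1)*B1 + rN' G1 H1 t"
definition rfun :: "real \<Rightarrow> real \<Rightarrow> real \<Rightarrow> real \<Rightarrow> real \<Rightarrow> real \<Rightarrow> real \<Rightarrow> real" where
  "rfun A0 B0 A1 B1 G1 H1 t = rN G1 H1 t / (rD A0 B0 A1 B1 G1 H1 t)^2"
definition rder :: "real \<Rightarrow> real \<Rightarrow> real \<Rightarrow> real \<Rightarrow> real \<Rightarrow> real \<Rightarrow> real \<Rightarrow> real" where
  "rder A0 B0 A1 B1 G1 H1 t = rN' G1 H1 t / (rD A0 B0 A1 B1 G1 H1 t)^2
     - 2 * rN G1 H1 t * rD' A0 B0 A1 B1 G1 H1 t / (rD A0 B0 A1 B1 G1 H1 t)^3"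

lemma rN_deriv: "((\<lambda>t. rN G1 H1 t) has_real_derivative rN' G1 H1 t) (at t)"
  unfolding rN_def rN'_def by (auto intro!: derivative_eq_intros simp: algebra_simps power2_eq_square)

lemma rD_deriv: "((\<lambda>t. rD A0 B0 A1 B1 G1 H1 t) has_real_derivative rD' A0 B0 A1 B1 G1 H1 t) (at t)"
  unfolding rD_def rD'_def by (auto intro!: derivative_eq_intros rN_deriv simp: algebra_simps)

lemma rfun_deriv:
  assumes "rD A0 B0 A1 B1 G1 H1 t \<noteq> 0"
  shows "((\<lambda>t. rfun A0 B0 A1 B1 G1 H1 t) has_real_derivative rder A0 B0 A1 B1 G1 H1 t) (at t)"
proof -
  define N where "N = rN G1 H1 t"
  define D where "D = rD A0 B0 A1 B1 G1 H1 t"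
  define N' where "N' = rN' G1 H1 t"
  define D' where "D' = rD' A0 B0 A1 B1 G1 H1 t"
  have dD2: "((\<lambda>t. (rD A0 B0 A1 B1 G1 H1 t)^2) has_real_derivative 2 * D * D') (at t)"
  proof -
    have "((\<lambda>t. rD A0 B0 A1 B1 G1 H1 t * rD A0 B0 A1 B1 G1 H1 t) has_real_derivative D' * D + D' * D) (at t)"
      using DERIV_mult[OF rD_deriv[of A0 B0 A1 B1 G1 H1 t] rD_deriv[of A0 B0 A1 B1 G1 H1 t]]
      by (simp add: D_def D'_def)
    then show ?thesis by (simp add: power2_eq_square algebra_simps)
  qed
  have "((\<lambda>t. rN G1 H1 t / (rD A0 B0 A1 B1 G1 H1 t)^2) has_real_derivative (N' * D^2 - N * (2*D*D')) / (D^2 * D^2)) (at t)"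
    using DERIV_divide[OF rN_deriv dD2] assms by (simp add: N_def D_def N'_def)
  moreover have "(N' * D^2 - N * (2*D*D')) / (D^2 * D^2) = N'/D^2 - 2*N*D'/D^3"
    using assms by (simp add: D_def[symmetric] field_simps power2_eq_square power3_eq_cube)
  ultimately show ?thesis unfolding rfun_def rder_def N_def D_def N'_def D'_def by simp
qed

lemma two_mul_le: "\<bar>2*u* v\<bar> \<le> u^2 + v^2" for u v :: real
proof -
  have "0 \<le> (\<bar>u\<bar> - \<bar>v\<bar>)^2" by simp
  then show ?thesis by (simp add: power2_eq_square abs_mult algebra_simps)
qed

lemma rN_le_rD: "rN G1 H1 t \<le> rD A0 B0 A1 B1 G1 H1 t"
  unfolding rD_def by simp

lemma rN'_bound: "\<bar>rN' G1 H1 t\<bar> \<le> G1^2 + H1^2 + rN G1 H1 t"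
proof -
  have "\<bar>2*(1+t*G1)*G1\<bar> \<le> (1+t*G1)^2 + G1^2" by (rule two_mul_le)
  moreover have "\<bar>2*(t*H1)*H1\<bar> \<le> (t*H1)^2 + H1^2" by (rule two_mul_le)
  ultimately show ?thesis unfolding rN'_def rN_def by linarith
qed

lemma rD'_bound: "\<bar>rD' A0 B0 A1 B1 G1 H1 t\<bar> \<le> A1^2 + B1^2 + G1^2 + H1^2 + rD A0 B0 A1 B1 G1 H1 t"
proof -
  have "\<bar>2*(A0+t*A1)*A1\<bar> \<le> (A0+t*A1)^2 + A1^2" by (rule two_mul_le)
  moreover have "\<bar>2*(B0+t*B1)*B1\<bar> \<le> (B0+t*B1)^2 + B1^2" by (rule two_mul_le)
  ultimately show ?thesis using rN'_bound[of G1 H1 t] unfolding rD'_def rD_def by linarith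
qed

lemma rder_bound:
  assumes R: "1 \<le> R" and c: "0 < c" and D: "c*R \<le> rD A0 B0 A1 B1 G1 H1 t"
    and K: "A1^2 + B1^2 + G1^2 + H1^2 \<le> K1*R"
  shows "\<bar>rder A0 B0 A1 B1 G1 H1 t\<bar> \<le> 3*(K1/c + 1)/(c*R)"
proof -
  define N where "N = rN G1 H1 t"
  define D where "D = rD A0 B0 A1 B1 G1 H1 t"
  define N' where "N' = rN' G1 H1 t"
  define D' where "D' = rD' A0 B0 A1 B1 G1 H1 t"
  define K2 where "K2 = K1/c + 1"
  have cR: "0 < c*R" using c R by simp
  have D0: "0 < D" using cR D by (simp add: D_def)
  have N0: "0 \<le> N" by (simp add: N_def rN_def)
  have ND: "N \<le> D" by (simp add: N_def D_def rN_le_rD)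
  have Rle: "R \<le> D/c" using D c by (simp add: D_def field_simps mult.commute)
  have K1R: "K1*R \<le> (K1/c)*D" 
  proof -
    have "0 \<le> K1*R" using K by (smt (verit) zero_le_power2)
    then have "0 \<le> K1" using R by (simp add: zero_le_mult_iff)
    then have "K1*R \<le> K1*(D/c)" using Rle by (intro mult_left_mono) auto
    then show ?thesis by simp
  qed
  have bN': "\<bar>N'\<bar> \<le> K2*D"
    using rN'_bound[of G1 H1 t] K K1R ND unfolding K2_def N'_def N_def D_def
    by (simp add: algebra_simps) (smt (verit) zero_le_power2)
  have bD': "\<bar>D'\<bar> \<le> K2*D"
    using rD'_bound[of A0 B0 A1 B1 G1 H1 t] K K1R unfolding K2_def D'_def D_def
    by (simp add: algebra_simps)
  have K20: "0 \<le> K2" using bN' D0 by (smt (verit) abs_ge_zero zero_le_mult_iff)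
  have "\<bar>rder A0 B0 A1 B1 G1 H1 t\<bar> = \<bar>N'/D^2 - 2*N*D'/D^3\<bar>"
    unfolding rder_def N_def D_def N'_def D'_def ..
  also have "\<dots> \<le> \<bar>N'\<bar>/D^2 + 2*N*\<bar>D'\<bar>/D^3"
  proof -
    have "\<bar>N'/D^2 - 2*N*D'/D^3\<bar> \<le> \<bar>N'/D^2\<bar> + \<bar>2*N*D'/D^3\<bar>" by (rule abs_triangle_ineq4)
    moreover have "\<bar>N'/D^2\<bar> = \<bar>N'\<bar>/D^2" using D0 by (simp add: abs_divide)
    moreover have "\<bar>2*N*D'/D^3\<bar> = 2*N*\<bar>D'\<bar>/D^3" using D0 N0 by (simp add: abs_divide abs_mult)
    ultimately show ?thesis by simp
  qed
  also have "\<dots> \<le> (K2*D)/D^2 + 2*D*(K2*D)/D^3"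
    using D0 N0 ND bN' bD' K20
    by (intro add_mono divide_right_mono mult_mono) simp_all
  also have "\<dots> = 3*K2/D" using D0 by (simp add: field_simps power2_eq_square power3_eq_cube)
  also have "\<dots> \<le> 3*K2/(c*R)"
    using D0 cR D K20 by (intro divide_left_mono) (simp_all add: D_def)
  finally show ?thesis by (simp add: K2_def)
qed

lemma rD_lower:
  assumes AB: "A0^2 + B0^2 = s*r2" and s: "0 < s" "s \<le> 1" and r2: "0 \<le> r2"
    and K: "A1^2 + B1^2 + G1^2 + H1^2 \<le> K1*(1+r2)" and t: "t^2*K1 \<le> s/4"
  shows "s/4*(1+r2) \<le> rD A0 B0 A1 B1 G1 H1 t"
proof -
  have sq: "u^2/2 - v^2 \<le> (u+v)^2" for u v :: real
  proof -
    have "0 \<le> (u + 2* v)^2" by simp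
    then show ?thesis by (simp add: power2_eq_square algebra_simps)
  qed
  have "rD A0 B0 A1 B1 G1 H1 t \<ge> (A0^2/2 - (t*A1)^2) + (B0^2/2 - (t*B1)^2) + (1/2 - (t*G1)^2) + (0 - (t*H1)^2)"
    unfolding rD_def rN_def using sq[of A0 "t*A1"] sq[of B0 "t*B1"] sq[of 1 "t*G1"]
    by (simp add: add.commute) (smt (verit) zero_le_power2)
  also have "(A0^2/2 - (t*A1)^2) + (B0^2/2 - (t*B1)^2) + (1/2 - (t*G1)^2) + (0 - (t*H1)^2)
      = (s*r2 + 1)/2 - t^2*(A1^2 + B1^2 + G1^2 + H1^2)"
    using AB by (simp add: power_mult_distrib algebra_simps)
  finally have f1: "(s*r2 + 1)/2 - t^2*(A1^2 + B1^2 + G1^2 + H1^2) \<le> rD A0 B0 A1 B1 G1 H1 t" .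
  define P where "P = s*(1+r2)"
  define X where "X = t^2*(A1^2 + B1^2 + G1^2 + H1^2)"
  have f2: "X \<le> P/4"
  proof -
    have "t^2*(A1^2 + B1^2 + G1^2 + H1^2) \<le> t^2*(K1*(1+r2))"
      using K by (intro mult_left_mono) simp_all
    also have "t^2*(K1*(1+r2)) \<le> s/4*(1+r2)"
      using t r2 by (simp add: mult.assoc[symmetric] mult_right_mono)
    finally show ?thesis by (simp add: X_def P_def)
  qed
  have f3: "P \<le> s*r2 + 1" using s by (simp add: algebra_simps P_def)
  have "P/4 \<le> rD A0 B0 A1 B1 G1 H1 t" using f1 f2 f3 unfolding X_def[symmetric] by argo
  then show ?thesis by (simp add: P_def)
qed


definition hf :: "complex^3 \<Rightarrow> complex^3 \<Rightarrow> real \<Rightarrow> complex \<Rightarrow> real" where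
  "hf x Z t z = wt (x + t *\<^sub>R Z) z * (cmod z)^2 * (cmod ((x + t *\<^sub>R Z)$2 * z + 1))^2"

definition Cz :: "complex \<Rightarrow> real" where "Cz z = 2*(cmod z)^2/(1+(cmod z)^2)^2"

definition hdv :: "complex^3 \<Rightarrow> complex^3 \<Rightarrow> real \<Rightarrow> complex \<Rightarrow> real" where
  "hdv x Z t z = Cz z * rder (Re (x$0*z)) (Im (x$0*z)) (Re (Z$0*z + Z$1)) (Im (Z$0*z + Z$1)) (Re (Z$2*z)) (Im (Z$2*z)) t"

lemma Hf_line: "Hf (x + t *\<^sub>R Z) = (LINT z|lborel. hf x Z t z)"
  by (simp add: Hf_def hf_def)

lemma hf_eq:
  assumes x: "x$1 = 0" "x$2 = 0"
  shows "hf x Z t z = Cz z * rfun (Re (x$0*z)) (Im (x$0*z)) (Re (Z$0*z + Z$1)) (Im (Z$0*z + Z$1)) (Re (Z$2*z)) (Im (Z$2*z)) t"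
proof -
  have p: "(x + t *\<^sub>R Z)$0 * z + (x + t *\<^sub>R Z)$1 = x$0*z + of_real t * (Z$0*z + Z$1)"
    unfolding vector_add_component vector_scaleR_component by (simp add: x scaleR_conv_of_real algebra_simps)
  have q: "(x + t *\<^sub>R Z)$2 * z + 1 = 1 + of_real t * (Z$2*z)"
    unfolding vector_add_component vector_scaleR_component by (simp add: x scaleR_conv_of_real algebra_simps)
  have cp: "(cmod ((x + t *\<^sub>R Z)$0 * z + (x + t *\<^sub>R Z)$1))^2
      = (Re (x$0*z) + t * Re (Z$0*z + Z$1))^2 + (Im (x$0*z) + t * Im (Z$0*z + Z$1))^2"
    unfolding p cmod_power2 by simp
  have cq: "(cmod ((x + t *\<^sub>R Z)$2 * z + 1))^2 = rN (Re (Z$2*z)) (Im (Z$2*z)) t"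
    unfolding q cmod_power2 rN_def by (simp add: algebra_simps)
  have Q: "Qf (x + t *\<^sub>R Z) z = rD (Re (x$0*z)) (Im (x$0*z)) (Re (Z$0*z + Z$1)) (Im (Z$0*z + Z$1)) (Re (Z$2*z)) (Im (Z$2*z)) t"
    unfolding Qf_def rD_def cq[symmetric] cp ..
  show ?thesis
    unfolding hf_def wt_def Q cq rfun_def Cz_def by (simp add: field_simps)
qed


lemma Bil_e0: "x$1 = 0 \<Longrightarrow> x$2 = 0 \<Longrightarrow> Bil x (e0v 1) (e0v 1) z = wt x z * (cmod z)^2"
  by (simp add: Bil_def Num_def cmod_sq_Re)

lemma integrable_wt_sq:
  assumes x: "x$1 = 0" "x$2 = 0" and a: "x$0 \<noteq> 0"
  shows "integrable lborel (\<lambda>z. wt x z * (cmod z)^2)"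
proof -
  have "detx x \<noteq> 0" using a by (simp add: detx_curve[OF x])
  from integrable_Bil[OF this, of "e0v 1" "e0v 1"] show ?thesis by (simp add: Bil_e0[OF x])
qed

lemma sq_sum_le: "(a + b)^2 \<le> 2*a^2 + 2*b^2" for a b :: real
proof -
  have "0 \<le> (a - b)^2" by simp
  then show ?thesis by (simp add: power2_eq_square algebra_simps)
qed

lemma coef_bound:
  fixes Z :: "complex^3"
  shows "(Re (Z$0*z + Z$1))^2 + (Im (Z$0*z + Z$1))^2 + (Re (Z$2*z))^2 + (Im (Z$2*z))^2
     \<le> (2*(cmod (Z$0))^2 + 2*(cmod (Z$1))^2 + (cmod (Z$2))^2) * (1 + (cmod z)^2)"
proof -
  have e1: "(Re (Z$0*z + Z$1))^2 + (Im (Z$0*z + Z$1))^2 = (cmod (Z$0*z + Z$1))^2" by (simp add: cmod_power2)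
  have e2: "(Re (Z$2*z))^2 + (Im (Z$2*z))^2 = (cmod (Z$2))^2 * (cmod z)^2"
  proof -
    have "(Re (Z$2*z))^2 + (Im (Z$2*z))^2 = (cmod (Z$2*z))^2" by (simp only: cmod_power2)
    then show ?thesis by (simp only: norm_mult power_mult_distrib)
  qed
  have "cmod (Z$0*z + Z$1) \<le> cmod (Z$0) * cmod z + cmod (Z$1)"
    using norm_triangle_ineq[of "Z$0*z" "Z$1"] by (simp only: norm_mult)
  then have "(cmod (Z$0*z + Z$1))^2 \<le> (cmod (Z$0) * cmod z + cmod (Z$1))^2"
    by (intro power_mono) simp_all
  also have "\<dots> \<le> 2*(cmod (Z$0) * cmod z)^2 + 2*(cmod (Z$1))^2" by (rule sq_sum_le)
  finally have i1: "(cmod (Z$0*z + Z$1))^2 \<le> 2*(cmod (Z$0))^2*(cmod z)^2 + 2*(cmod (Z$1))^2"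
    by (simp add: power_mult_distrib)
  have "2*(cmod (Z$0))^2*(cmod z)^2 + 2*(cmod (Z$1))^2 + (cmod (Z$2))^2 * (cmod z)^2
      \<le> (2*(cmod (Z$0))^2 + 2*(cmod (Z$1))^2 + (cmod (Z$2))^2) * (1 + (cmod z)^2)"
    by (simp add: algebra_simps)
  moreover have "(Re (Z$0*z + Z$1))^2 + (Im (Z$0*z + Z$1))^2 + (Re (Z$2*z))^2 + (Im (Z$2*z))^2
     = (cmod (Z$0*z + Z$1))^2 + (cmod (Z$2))^2 * (cmod z)^2"
    using e1 e2 by simp
  ultimately show ?thesis using i1 by argo
qed

lemma div_sq: "(R::real) \<noteq> 0 \<Longrightarrow> 2*R/R^2 = 2/R"
  by (simp add: power2_eq_square)

lemma Cz_bound: "0 \<le> Cz z" "Cz z \<le> 2/(1+(cmod z)^2)"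
proof -
  show "0 \<le> Cz z" by (simp add: Cz_def)
  have R: "0 < 1+(cmod z)^2" by (simp add: add_pos_nonneg)
  have "Cz z = 2*(cmod z)^2/(1+(cmod z)^2)^2" by (simp add: Cz_def)
  also have "\<dots> \<le> 2*(1+(cmod z)^2)/(1+(cmod z)^2)^2"
    using R by (intro divide_right_mono) simp_all
  also have "\<dots> = 2/(1+(cmod z)^2)" using R div_sq[of "1+(cmod z)^2"] by simp
  finally show "Cz z \<le> 2/(1+(cmod z)^2)" .
qed

lemma line_deriv_int:
  assumes x: "x$1 = 0" "x$2 = 0" and s: "0 < (cmod (x$0))^2" "(cmod (x$0))^2 < 1"
  shows "((\<lambda>t. Hf (x + t *\<^sub>R Z)) has_real_derivative (LINT z|lborel. hdv x Z 0 z)) (at 0)"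
proof -
  define sv where "sv = (cmod (x$0))^2"
  define K1 where "K1 = 2*(cmod (Z$0))^2 + 2*(cmod (Z$1))^2 + (cmod (Z$2))^2"
  define c where "c = sv/4"
  define d where "d = min 1 (sv/(4*K1+1))"
  define g where "g z = 6*(K1/c+1)/c * (1/(1+(cmod z)^2)^2)" for z :: complex
  have sv: "0 < sv" "sv < 1" using s by (simp_all add: sv_def)
  have K1: "0 \<le> K1" by (simp add: K1_def)
  have c: "0 < c" using sv by (simp add: c_def)
  have d: "0 < d" using sv K1 by (simp add: d_def)
  have tK: "t^2*K1 \<le> sv/4" if t: "\<bar>t\<bar> < d" for t
  proof -
    have t1: "\<bar>t\<bar> < 1" "\<bar>t\<bar> < sv/(4*K1+1)" using t by (simp_all add: d_def)
    have "t^2 = \<bar>t\<bar>*\<bar>t\<bar>" by (simp add: power2_eq_square)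
    also have "\<dots> \<le> \<bar>t\<bar>*1" using t1(1) by (intro mult_left_mono) simp_all
    finally have "t^2 \<le> \<bar>t\<bar>" by simp
    also have "\<dots> \<le> sv/(4*K1+1)" using t1(2) by simp
    finally have "t^2*K1 \<le> sv/(4*K1+1)*K1" using K1 by (intro mult_right_mono) simp_all
    also have "sv/(4*K1+1)*K1 \<le> sv/4"
      using K1 sv by (simp add: field_simps)
    finally show ?thesis .
  qed
  have A0B0: "(Re (x$0*z))^2 + (Im (x$0*z))^2 = sv*(cmod z)^2" for z
  proof -
    have "(Re (x$0*z))^2 + (Im (x$0*z))^2 = (cmod (x$0*z))^2" by (simp only: cmod_power2)
    then show ?thesis by (simp only: norm_mult power_mult_distrib sv_def)
  qed
  have Dlow: "c*(1+(cmod z)^2) \<le> rD (Re (x$0*z)) (Im (x$0*z)) (Re (Z$0*z + Z$1)) (Im (Z$0*z + Z$1)) (Re (Z$2*z)) (Im (Z$2*z)) t"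
    if "\<bar>t\<bar> < d" for t z
    unfolding c_def
    by (rule rD_lower[OF A0B0 sv(1) _ _ _ tK[OF that]]) (use sv coef_bound[of Z z] in \<open>simp_all add: K1_def\<close>)
  have der: "((\<lambda>t. hf x Z t z) has_real_derivative hdv x Z t z) (at t)" if "\<bar>t\<bar> < d" for t z
  proof -
    have R: "0 < 1+(cmod z)^2" by (simp add: add_pos_nonneg)
    have "0 < rD (Re (x$0*z)) (Im (x$0*z)) (Re (Z$0*z + Z$1)) (Im (Z$0*z + Z$1)) (Re (Z$2*z)) (Im (Z$2*z)) t"
      using Dlow[OF that, of z] c R by (smt (verit) mult_pos_pos)
    then have "((\<lambda>t. Cz z * rfun (Re (x$0*z)) (Im (x$0*z)) (Re (Z$0*z + Z$1)) (Im (Z$0*z + Z$1)) (Re (Z$2*z)) (Im (Z$2*z)) t) has_real_derivative hdv x Z t z) (at t)"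
      unfolding hdv_def by (intro DERIV_cmult rfun_deriv) simp
    then show ?thesis by (simp add: hf_eq[OF x])
  qed
  have bnd: "\<bar>hdv x Z t z\<bar> \<le> g z" if "\<bar>t\<bar> < d" for t z
  proof -
    define R where "R = 1+(cmod z)^2"
    have R: "1 \<le> R" by (simp add: R_def)
    have rb: "\<bar>rder (Re (x$0*z)) (Im (x$0*z)) (Re (Z$0*z + Z$1)) (Im (Z$0*z + Z$1)) (Re (Z$2*z)) (Im (Z$2*z)) t\<bar> \<le> 3*(K1/c + 1)/(c*R)"
      by (rule rder_bound[OF R c]) (use Dlow[OF that, of z] coef_bound[of Z z] in \<open>simp_all add: R_def K1_def\<close>)
    have "\<bar>hdv x Z t z\<bar> = Cz z * \<bar>rder (Re (x$0*z)) (Im (x$0*z)) (Re (Z$0*z + Z$1)) (Im (Z$0*z + Z$1)) (Re (Z$2*z)) (Im (Z$2*z)) t\<bar>"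
      unfolding hdv_def using Cz_bound(1)[of z] by (simp add: abs_mult)
    also have "\<dots> \<le> (2/R) * (3*(K1/c + 1)/(c*R))"
      using Cz_bound[of z] rb by (intro mult_mono) (simp_all add: R_def)
    also have "\<dots> = g z" using R by (simp add: g_def R_def field_simps power2_eq_square)
    finally show ?thesis .
  qed
  have meas: "hf x Z t \<in> borel_measurable lborel" for t
    unfolding hf_def wt_def Qf_def by measurable
  have f'meas: "hdv x Z 0 \<in> borel_measurable lborel"
    unfolding hdv_def Cz_def rder_def rN_def rD_def rN'_def rD'_def by measurable
  have int0: "integrable lborel (hf x Z 0)"
  proof -
    have "x$0 \<noteq> 0" using s by auto
    then have "integrable lborel (\<lambda>z. wt x z * (cmod z)^2)" by (rule integrable_wt_sq[OF x])
    moreover have "hf x Z 0 = (\<lambda>z. wt x z * (cmod z)^2)" by (simp add: hf_def x fun_eq_iff)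
    ultimately show ?thesis by simp
  qed
  have gi: "integrable lborel g"
    unfolding g_def using integrable_w0 by (rule integrable_mult_right)
  have "((\<lambda>t. LINT z|lborel. hf x Z t z) has_real_derivative (LINT z|lborel. hdv x Z 0 z)) (at 0)"
    by (rule DERIV_integral_param[OF d meas f'meas int0 der bnd gi])
  then show ?thesis by (simp add: Hf_line)
qed


lemma rder0: "rder A0 B0 A1 B1 G1 H1 0 = 2*G1/(A0^2+B0^2+1)^2 - 2*(2*A0*A1 + 2*B0*B1 + 2*G1)/(A0^2+B0^2+1)^3"
  by (simp add: rder_def rN_def rD_def rN'_def rD'_def)

lemma rder0_add:
  "rder A0 B0 (A1+A1') (B1+B1') (G1+G1') H 0 = rder A0 B0 A1 B1 G1 H' 0 + rder A0 B0 A1' B1' G1' H'' 0"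
  unfolding rder0 by (simp add: add_divide_distrib diff_divide_distrib algebra_simps)

lemma rder0_odd:
  "rder (-A0) (-B0) A1 B1 (-G1) H 0 = - rder A0 B0 A1 B1 G1 H' 0"
  unfolding rder0 by (simp add: add_divide_distrib diff_divide_distrib algebra_simps)

lemma hd0_split:
  fixes Z :: "complex^3"
  shows "hdv x Z 0 z = hdv x (e0v (Z$0)) 0 z + hdv x (Z - e0v (Z$0)) 0 z"
proof -
  define A0 B0 where "A0 = Re (x$0*z)" and "B0 = Im (x$0*z)"
  have eq: "rder A0 B0 (Re (Z$0*z) + Re (Z$1)) (Im (Z$0*z) + Im (Z$1)) (0 + Re (Z$2*z)) (Im (Z$2*z)) 0
     = rder A0 B0 (Re (Z$0*z)) (Im (Z$0*z)) 0 0 0 + rder A0 B0 (Re (Z$1)) (Im (Z$1)) (Re (Z$2*z)) (Im (Z$2*z)) 0"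
    by (rule rder0_add)
  have l: "hdv x Z 0 z = Cz z * rder A0 B0 (Re (Z$0*z) + Re (Z$1)) (Im (Z$0*z) + Im (Z$1)) (0 + Re (Z$2*z)) (Im (Z$2*z)) 0"
    by (simp add: hdv_def A0_def B0_def)
  have r1: "hdv x (e0v (Z$0)) 0 z = Cz z * rder A0 B0 (Re (Z$0*z)) (Im (Z$0*z)) 0 0 0"
    by (simp add: hdv_def A0_def B0_def)
  have r2: "hdv x (Z - e0v (Z$0)) 0 z = Cz z * rder A0 B0 (Re (Z$1)) (Im (Z$1)) (Re (Z$2*z)) (Im (Z$2*z)) 0"
    by (simp add: hdv_def A0_def B0_def)
  show ?thesis unfolding l r1 r2 eq by (simp only: distrib_left)
qed

lemma hd0_odd:
  fixes Z :: "complex^3"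
  assumes "Z$0 = 0"
  shows "hdv x Z 0 (-z) = - hdv x Z 0 z"
proof -
  have "Cz (-z) = Cz z" by (simp add: Cz_def)
  moreover have "rder (Re (x$0*(-z))) (Im (x$0*(-z))) (Re (Z$0*(-z) + Z$1)) (Im (Z$0*(-z) + Z$1)) (Re (Z$2*(-z))) (Im (Z$2*(-z))) 0
      = - rder (Re (x$0*z)) (Im (x$0*z)) (Re (Z$0*z + Z$1)) (Im (Z$0*z + Z$1)) (Re (Z$2*z)) (Im (Z$2*z)) 0"
    using rder0_odd[of "Re (x$0*z)" "Im (x$0*z)" "Re (Z$1)" "Im (Z$1)" "Re (Z$2*z)"] assms by simp
  ultimately show ?thesis unfolding hdv_def by simp
qed


lemma integrable_hd0:
  assumes x: "x$1 = 0" "x$2 = 0" and s: "0 < (cmod (x$0))^2" "(cmod (x$0))^2 < 1"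
  shows "integrable lborel (hdv x Z 0)"
proof (rule Bochner_Integration.integrable_bound)
  define sv where "sv = (cmod (x$0))^2"
  define K1 where "K1 = 2*(cmod (Z$0))^2 + 2*(cmod (Z$1))^2 + (cmod (Z$2))^2"
  define c where "c = sv/4"
  define g where "g z = 6*(K1/c+1)/c * (1/(1+(cmod z)^2)^2)" for z :: complex
  have sv: "0 < sv" "sv < 1" using s by (simp_all add: sv_def)
  have c: "0 < c" using sv by (simp add: c_def)
  have A0B0: "(Re (x$0*z))^2 + (Im (x$0*z))^2 = sv*(cmod z)^2" for z
  proof -
    have "(Re (x$0*z))^2 + (Im (x$0*z))^2 = (cmod (x$0*z))^2" by (simp only: cmod_power2)
    then show ?thesis by (simp only: norm_mult power_mult_distrib sv_def)
  qed
  have Dlow: "c*(1+(cmod z)^2) \<le> rD (Re (x$0*z)) (Im (x$0*z)) (Re (Z$0*z + Z$1)) (Im (Z$0*z + Z$1)) (Re (Z$2*z)) (Im (Z$2*z)) 0" for z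
    unfolding c_def
    by (rule rD_lower[OF A0B0 sv(1)]) (use sv coef_bound[of Z z] in \<open>simp_all add: K1_def\<close>)
  have bnd: "\<bar>hdv x Z 0 z\<bar> \<le> g z" for z
  proof -
    define R where "R = 1+(cmod z)^2"
    have R: "1 \<le> R" by (simp add: R_def)
    have rb: "\<bar>rder (Re (x$0*z)) (Im (x$0*z)) (Re (Z$0*z + Z$1)) (Im (Z$0*z + Z$1)) (Re (Z$2*z)) (Im (Z$2*z)) 0\<bar> \<le> 3*(K1/c + 1)/(c*R)"
      by (rule rder_bound[OF R c]) (use Dlow[of z] coef_bound[of Z z] in \<open>simp_all add: R_def K1_def\<close>)
    have "\<bar>hdv x Z 0 z\<bar> = Cz z * \<bar>rder (Re (x$0*z)) (Im (x$0*z)) (Re (Z$0*z + Z$1)) (Im (Z$0*z + Z$1)) (Re (Z$2*z)) (Im (Z$2*z)) 0\<bar>"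
      unfolding hdv_def using Cz_bound(1)[of z] by (simp add: abs_mult)
    also have "\<dots> \<le> (2/R) * (3*(K1/c + 1)/(c*R))"
      using Cz_bound[of z] rb by (intro mult_mono) (simp_all add: R_def)
    also have "\<dots> = g z" using R by (simp add: g_def R_def field_simps power2_eq_square)
    finally show ?thesis .
  qed
  show "integrable lborel g"
    unfolding g_def using integrable_w0 by (rule integrable_mult_right)
  show "hdv x Z 0 \<in> borel_measurable lborel"
    unfolding hdv_def Cz_def rder_def rN_def rD_def rN'_def rD'_def by measurable
  show "AE z in lborel. norm (hdv x Z 0 z) \<le> norm (g z)"
    using bnd by (auto intro!: AE_I2 intro: order.trans[OF _ abs_ge_self])
qed

lemma DERIV_F: "0 < s \<Longrightarrow> s < 1 \<Longrightarrow> (F has_real_derivative F1 s) (at s)"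
  unfolding F_def[abs_def] F1_def using DERIV_Ic by (intro DERIV_cmult) auto

lemma tan_deriv:
  assumes x: "x$1 = 0" "x$2 = 0" and s: "0 < (cmod (x$0))^2" "(cmod (x$0))^2 < 1"
  shows "((\<lambda>t. Hf (x + t *\<^sub>R e0v \<alpha>)) has_real_derivative F1 ((cmod (x$0))^2) * (2 * Re (cnj (x$0) * \<alpha>))) (at 0)"
proof -
  define g where "g t = (Re (x$0) + t * Re \<alpha>)^2 + (Im (x$0) + t * Im \<alpha>)^2" for t
  have g0: "g 0 = (cmod (x$0))^2" by (simp add: g_def cmod_power2)
  have gc: "(x + t *\<^sub>R e0v \<alpha>)$0 = x$0 + of_real t * \<alpha>" for t
    unfolding vector_add_component vector_scaleR_component by (simp add: scaleR_conv_of_real)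
  have gcm: "(cmod ((x + t *\<^sub>R e0v \<alpha>)$0))^2 = g t" for t
    unfolding gc g_def cmod_power2 by simp
  have gcm2: "(cmod (x$0 + t *\<^sub>R \<alpha>))^2 = g t" for t
    unfolding g_def cmod_power2 by simp
  have dg: "(g has_real_derivative 2 * Re (cnj (x$0) * \<alpha>)) (at 0)"
    unfolding g_def by (auto intro!: derivative_eq_intros simp: algebra_simps)
  have dFg: "((\<lambda>t. F (g t)) has_real_derivative F1 ((cmod (x$0))^2) * (2 * Re (cnj (x$0) * \<alpha>))) (at 0)"
    using DERIV_chain2[OF DERIV_F[OF s[folded g0]] dg] g0 by simp
  have gcont: "isCont g 0" unfolding g_def by (intro continuous_intros)
  have "eventually (\<lambda>t. 0 < g t \<and> g t < 1) (at 0)"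
  proof -
    have t1: "(g \<longlongrightarrow> g 0) (at 0)" using gcont isCont_def by blast
    have a: "0 < g 0" "g 0 < 1" using s g0 by simp_all
    show ?thesis using order_tendstoD(1)[OF t1 a(1)] order_tendstoD(2)[OF t1 a(2)] by (rule eventually_conj)
  qed
  then have ev: "eventually (\<lambda>t. 0 < g t \<and> g t < 1) (nhds 0)"
    using s g0 by (simp add: eventually_nhds_conv_at)
  have "eventually (\<lambda>t. F (g t) = Hf (x + t *\<^sub>R e0v \<alpha>)) (nhds 0)"
    using ev
  proof eventually_elim
    case (elim t)
    have "Hf (x + t *\<^sub>R e0v \<alpha>) = F ((cmod ((x + t *\<^sub>R e0v \<alpha>)$0))^2)"
      by (rule Hf_curve) (use x elim gcm in simp_all)
    then show ?case by (simp add: gcm gcm2)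
  qed
  then show ?thesis using dFg DERIV_cong_ev[of 0 0 "\<lambda>t. F (g t)" "\<lambda>t. Hf (x + t *\<^sub>R e0v \<alpha>)"] by blast
qed

lemma line_deriv:
  assumes x: "x$1 = 0" "x$2 = 0" and s: "0 < (cmod (x$0))^2" "(cmod (x$0))^2 < 1"
  shows "((\<lambda>t. Hf (x + t *\<^sub>R Z)) has_real_derivative F1 ((cmod (x$0))^2) * (2 * Re (cnj (x$0) * Z$0))) (at 0)"
proof -
  define Zt where "Zt = e0v (Z$0)"
  define Zn where "Zn = Z - Zt"
  have i1: "(LINT z|lborel. hdv x Zt 0 z) = F1 ((cmod (x$0))^2) * (2 * Re (cnj (x$0) * Z$0))"
    using DERIV_unique[OF line_deriv_int[OF x s, of "e0v (Z$0)"] tan_deriv[OF x s, of "Z$0"]] by (simp add: Zt_def)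
  have i2: "(LINT z|lborel. hdv x Zn 0 z) = 0"
  proof (rule integral_odd_complex)
    show "hdv x Zn 0 \<in> borel_measurable borel"
      unfolding hdv_def Cz_def rder_def rN_def rD_def rN'_def rD'_def by measurable
    show "hdv x Zn 0 (- z) = - hdv x Zn 0 z" for z
      by (rule hd0_odd) (simp add: Zn_def Zt_def)
  qed
  have "(LINT z|lborel. hdv x Z 0 z) = (LINT z|lborel. hdv x Zt 0 z + hdv x Zn 0 z)"
    using hd0_split[of x Z] by (simp add: Zt_def Zn_def)
  also have "\<dots> = (LINT z|lborel. hdv x Zt 0 z) + (LINT z|lborel. hdv x Zn 0 z)"
    by (rule Bochner_Integration.integral_add) (rule integrable_hd0[OF x s])+
  finally have "(LINT z|lborel. hdv x Z 0 z) = F1 ((cmod (x$0))^2) * (2 * Re (cnj (x$0) * Z$0))"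
    using i1 i2 by simp
  then show ?thesis using line_deriv_int[OF x s, of Z] by simp
qed


definition curvept :: "complex^3 \<Rightarrow> bool" where
  "curvept x \<longleftrightarrow> x$1 = 0 \<and> x$2 = 0 \<and> 0 < (cmod (x$0))^2 \<and> (cmod (x$0))^2 < 1"

lemma F_pos: "0 < s \<Longrightarrow> s < 1 \<Longrightarrow> 0 < F s"
  unfolding F_def using Fint_closed(2) by simp

lemma ev_open_interval:
  fixes h :: "real \<Rightarrow> real"
  assumes "isCont h 0" "lo < h 0" "h 0 < hi"
  shows "eventually (\<lambda>t. lo < h t \<and> h t < hi) (nhds 0)"
proof -
  have t1: "(h \<longlongrightarrow> h 0) (at 0)" using assms(1) isCont_def by blast
  have "eventually (\<lambda>t. lo < h t \<and> h t < hi) (at 0)"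
    using order_tendstoD(1)[OF t1 assms(2)] order_tendstoD(2)[OF t1 assms(3)] by (rule eventually_conj)
  then show ?thesis using assms(2,3) by (simp add: eventually_nhds_conv_at)
qed

lemma comp0_line: "(x + t *\<^sub>R Z)$0 = x$0 + of_real t * Z$0"
  unfolding vector_add_component vector_scaleR_component by (simp add: scaleR_conv_of_real)
lemma comp1_line: "(x + t *\<^sub>R Z)$1 = x$1 + of_real t * Z$1"
  unfolding vector_add_component vector_scaleR_component by (simp add: scaleR_conv_of_real)
lemma comp2_line: "(x + t *\<^sub>R Z)$2 = x$2 + of_real t * Z$2"
  unfolding vector_add_component vector_scaleR_component by (simp add: scaleR_conv_of_real)

lemma ev_curve:
  assumes "curvept x" "X$1 = 0" "X$2 = 0"
  shows "eventually (\<lambda>t. curvept (x + t *\<^sub>R X)) (nhds 0)"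
proof -
  have "eventually (\<lambda>t. 0 < (cmod ((x + t *\<^sub>R X)$0))^2 \<and> (cmod ((x + t *\<^sub>R X)$0))^2 < 1) (nhds 0)"
    by (rule ev_open_interval) (use assms(1) in \<open>auto simp: curvept_def intro!: continuous_intros\<close>)
  then show ?thesis
  proof eventually_elim
    case (elim t)
    then show ?case using assms by (simp only: curvept_def vector_add_component vector_scaleR_component) simp
  qed
qed

lemma ev_det:
  assumes "curvept x"
  shows "eventually (\<lambda>t. detx (x + t *\<^sub>R Z) \<noteq> 0) (nhds 0)"
proof -
  have "eventually (\<lambda>t. 0 < cmod (detx (x + t *\<^sub>R Z)) \<and> cmod (detx (x + t *\<^sub>R Z)) < cmod (x$0) + 1) (nhds 0)"
    by (rule ev_open_interval) (use assms(1) in \<open>auto simp: curvept_def detx_def intro!: continuous_intros\<close>)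
  then show ?thesis by eventually_elim auto
qed

lemma dd_Hf:
  assumes x: "curvept x" and ev: "eventually (\<lambda>t. \<psi> (x + t *\<^sub>R Z) = c * Hf (x + t *\<^sub>R Z)) (nhds 0)"
  shows "dd \<psi> x Z = c * (F1 ((cmod (x$0))^2) * (2 * Re (cnj (x$0) * Z$0)))"
proof -
  have xx: "x$1 = 0" "x$2 = 0" "0 < (cmod (x$0))^2" "(cmod (x$0))^2 < 1" using x by (simp_all add: curvept_def)
  have "((\<lambda>t. c * Hf (x + t *\<^sub>R Z)) has_real_derivative c * (F1 ((cmod (x$0))^2) * (2 * Re (cnj (x$0) * Z$0)))) (at 0)"
    by (intro DERIV_cmult line_deriv[OF xx])
  then have "((\<lambda>t. \<psi> (x + t *\<^sub>R Z)) has_real_derivative c * (F1 ((cmod (x$0))^2) * (2 * Re (cnj (x$0) * Z$0)))) (at 0)"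
    using DERIV_cong_ev[OF refl ev refl] by blast
  then show ?thesis unfolding dd_def by (rule DERIV_imp_deriv)
qed

lemma gam_curve_Hf:
  assumes "curvept y" "Y$1 = 0" "Y$2 = 0"
  shows "gam 3 y Y Z = Re (Y$0 * cnj (Z$0)) * Hf y"
proof -
  have yy: "y$1 = 0" "y$2 = 0" "0 < (cmod (y$0))^2" "(cmod (y$0))^2 < 1" using assms(1) by (simp_all add: curvept_def)
  show ?thesis using gam_curve[OF yy assms(2,3), of Z] Hf_curve[OF yy] by simp
qed

lemma koszul_id:
  fixes A \<xi> \<eta> \<zeta> :: complex
  shows "Re (A*\<xi>) * Re (\<eta>*cnj \<zeta>) + Re (A*\<eta>) * Re (\<xi>*cnj \<zeta>) - Re (A*\<zeta>) * Re (\<xi>*cnj \<eta>) = Re (A*\<xi>*\<eta>*cnj \<zeta>)"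
  by (simp add: algebra_simps)


definition Gf :: "complex^3 \<Rightarrow> complex" where
  "Gf x = of_real (F1 ((cmod (x$0))^2) / F ((cmod (x$0))^2)) * cnj (x$0)"

lemma curvept_D: "curvept x \<Longrightarrow> x$1 = 0 \<and> x$2 = 0 \<and> 0 < (cmod (x$0))^2 \<and> (cmod (x$0))^2 < 1"
  by (simp add: curvept_def)

lemma Chr_curve:
  assumes x: "curvept x"
  shows "Chr 3 x (e0v \<xi>) (e0v \<eta>) = e0v (Gf x * \<xi> * \<eta>)"
proof -
  have xx: "x$1 = 0" "x$2 = 0" "0 < (cmod (x$0))^2" "(cmod (x$0))^2 < 1" using curvept_D[OF x] by auto
  define sv where "sv = (cmod (x$0))^2"
  have Fp: "0 < F sv" using F_pos xx by (simp add: sv_def)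
  have dx: "detx x \<noteq> 0" using xx by (auto simp: detx_curve)
  define RHS where "RHS Z = (dd (\<lambda>y. gam 3 y (e0v \<eta>) Z) x (e0v \<xi>) + dd (\<lambda>y. gam 3 y (e0v \<xi>) Z) x (e0v \<eta>)
      - dd (\<lambda>y. gam 3 y (e0v \<xi>) (e0v \<eta>)) x Z) / 2" for Z
  have d1: "dd (\<lambda>y. gam 3 y (e0v \<eta>) Z) x (e0v \<xi>) = Re (\<eta> * cnj (Z$0)) * (F1 sv * (2 * Re (cnj (x$0) * \<xi>)))" for Z
  proof -
    have "eventually (\<lambda>t. gam 3 (x + t *\<^sub>R e0v \<xi>) (e0v \<eta>) Z = Re (\<eta> * cnj (Z$0)) * Hf (x + t *\<^sub>R e0v \<xi>)) (nhds 0)"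
      using ev_curve[OF x e0v_comp(2)[of \<xi>] e0v_comp(3)[of \<xi>]] by eventually_elim (simp add: gam_curve_Hf)
    from dd_Hf[OF x this] show ?thesis by (simp add: sv_def)
  qed
  have d2: "dd (\<lambda>y. gam 3 y (e0v \<xi>) Z) x (e0v \<eta>) = Re (\<xi> * cnj (Z$0)) * (F1 sv * (2 * Re (cnj (x$0) * \<eta>)))" for Z
  proof -
    have "eventually (\<lambda>t. gam 3 (x + t *\<^sub>R e0v \<eta>) (e0v \<xi>) Z = Re (\<xi> * cnj (Z$0)) * Hf (x + t *\<^sub>R e0v \<eta>)) (nhds 0)"
      using ev_curve[OF x e0v_comp(2)[of \<eta>] e0v_comp(3)[of \<eta>]] by eventually_elim (simp add: gam_curve_Hf)
    from dd_Hf[OF x this] show ?thesis by (simp add: sv_def)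
  qed
  have d3: "dd (\<lambda>y. gam 3 y (e0v \<xi>) (e0v \<eta>)) x Z = Re (\<xi> * cnj \<eta>) * (F1 sv * (2 * Re (cnj (x$0) * Z$0)))" for Z
  proof -
    have "eventually (\<lambda>t. gam 3 (x + t *\<^sub>R Z) (e0v \<xi>) (e0v \<eta>) = Re (\<xi> * cnj \<eta>) * Hf (x + t *\<^sub>R Z)) (nhds 0)"
      using ev_det[OF x, of Z] by eventually_elim (simp add: gam_tan)
    from dd_Hf[OF x this] show ?thesis by (simp add: sv_def)
  qed
  have P0: "gam 3 x (e0v (Gf x * \<xi> * \<eta>)) Z = RHS Z" for Z
  proof -
    have "gam 3 x (e0v (Gf x * \<xi> * \<eta>)) Z = F sv * Re (Gf x * \<xi> * \<eta> * cnj (Z$0))"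
      using gam_curve[OF xx, of "e0v (Gf x * \<xi> * \<eta>)" Z] by (simp add: sv_def)
    also have "\<dots> = F1 sv * Re (cnj (x$0) * \<xi> * \<eta> * cnj (Z$0))"
      using Fp by (simp add: Gf_def sv_def[symmetric] mult.assoc)
    also have "\<dots> = F1 sv * (Re (cnj (x$0)*\<xi>) * Re (\<eta>*cnj (Z$0)) + Re (cnj (x$0)*\<eta>) * Re (\<xi>*cnj (Z$0)) - Re (cnj (x$0)*Z$0) * Re (\<xi>*cnj \<eta>))"
      by (simp only: koszul_id)
    also have "\<dots> = RHS Z"
      unfolding RHS_def d1 d2 d3 by (simp add: algebra_simps)
    finally show ?thesis .
  qed
  show ?thesis
    unfolding Chr_def RHS_def[symmetric]
  proof (rule the_equality)
    show "\<forall>Z. gam 3 x (e0v (Gf x * \<xi> * \<eta>)) Z = RHS Z" using P0 by simp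
    fix w assume "\<forall>Z. gam 3 x w Z = RHS Z"
    then have "\<And>Z. gam 3 x w Z = gam 3 x (e0v (Gf x * \<xi> * \<eta>)) Z" using P0 by simp
    then show "w = e0v (Gf x * \<xi> * \<eta>)" by (rule gam_unique[OF dx])
  qed
qed


definition phi :: "real \<Rightarrow> real" where "phi s = F1 s / F s"
definition phi' :: "real \<Rightarrow> real" where "phi' s = (F2 s * F s - F1 s * F1 s) / (F s * F s)"

lemma DERIV_F1: "0 < s \<Longrightarrow> s < 1 \<Longrightarrow> (F1 has_real_derivative F2 s) (at s)"
  unfolding F1_def[abs_def] F2_def using DERIV_Ic1 by (intro DERIV_cmult) auto

lemma DERIV_phi: "0 < s \<Longrightarrow> s < 1 \<Longrightarrow> (phi has_real_derivative phi' s) (at s)"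
  unfolding phi_def[abs_def] phi'_def
  using DERIV_divide[OF DERIV_F1 DERIV_F] F_pos by (simp add: less_imp_neq[symmetric])

definition DG :: "complex^3 \<Rightarrow> complex \<Rightarrow> complex" where
  "DG x v = of_real (phi ((cmod (x$0))^2)) * cnj v
     + of_real (phi' ((cmod (x$0))^2) * (2 * Re (cnj (x$0) * v))) * cnj (x$0)"

lemma e0v_add: "e0v (a + b) = e0v a + e0v b"
  by (simp add: e0v_def vec_eq_iff)
lemma e0v_scaleR: "e0v (r *\<^sub>R a) = r *\<^sub>R e0v a"
  by (simp add: e0v_def vec_eq_iff)
lemma e0v_diff: "e0v (a - b) = e0v a - e0v b"
  by (simp add: e0v_def vec_eq_iff)

lemma bounded_linear_e0v: "bounded_linear e0v"
proof -
  have "linear e0v" by (rule linearI) (simp_all add: e0v_add e0v_scaleR)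
  then show ?thesis by (simp add: linear_conv_bounded_linear)
qed

lemma ddv_Chr:
  assumes x: "curvept x"
  shows "ddv (\<lambda>y. Chr 3 y (e0v \<eta>) (e0v \<zeta>)) x (e0v v) = e0v (DG x v * \<eta> * \<zeta>)"
proof -
  have xx: "x$1 = 0" "x$2 = 0" "0 < (cmod (x$0))^2" "(cmod (x$0))^2 < 1" using curvept_D[OF x] by auto
  define g where "g t = (Re (x$0) + t * Re v)^2 + (Im (x$0) + t * Im v)^2" for t
  have g0: "g 0 = (cmod (x$0))^2" by (simp add: g_def cmod_power2)
  have gcm: "(cmod (x$0 + t *\<^sub>R v))^2 = g t" for t
    unfolding g_def cmod_power2 by simp
  have dg: "(g has_real_derivative 2 * Re (cnj (x$0) * v)) (at 0)"
    unfolding g_def by (auto intro!: derivative_eq_intros simp: algebra_simps)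
  have dpg: "((\<lambda>t. phi (g t)) has_real_derivative phi' ((cmod (x$0))^2) * (2 * Re (cnj (x$0) * v))) (at 0)"
    using DERIV_chain2[OF DERIV_phi[OF xx(3,4), folded g0] dg] g0 by simp
  have Geq: "Gf (x + t *\<^sub>R e0v v) = of_real (phi (g t)) * (cnj (x$0) + t *\<^sub>R cnj v)" for t
    by (simp add: Gf_def phi_def gcm)
  have dw: "((\<lambda>t. of_real (phi (g t)) * (cnj (x$0) + t *\<^sub>R cnj v) * \<eta> * \<zeta>) has_vector_derivative DG x v * \<eta> * \<zeta>) (at 0)"
  proof -
    have d1: "((\<lambda>t. of_real (phi (g t)) :: complex) has_vector_derivative of_real (phi' ((cmod (x$0))^2) * (2 * Re (cnj (x$0) * v)))) (at 0)"
      by (rule has_vector_derivative_of_real[OF dpg])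
    have d2: "((\<lambda>t. cnj (x$0) + t *\<^sub>R cnj v) has_vector_derivative cnj v) (at 0)"
      by (auto intro!: derivative_eq_intros)
    have "((\<lambda>t. of_real (phi (g t)) * (cnj (x$0) + t *\<^sub>R cnj v)) has_vector_derivative
        of_real (phi (g 0)) * cnj v + of_real (phi' ((cmod (x$0))^2) * (2 * Re (cnj (x$0) * v))) * (cnj (x$0) + 0 *\<^sub>R cnj v)) (at 0)"
      by (rule has_vector_derivative_mult[OF d1 d2])
    then have "((\<lambda>t. of_real (phi (g t)) * (cnj (x$0) + t *\<^sub>R cnj v)) has_vector_derivative DG x v) (at 0)"
      by (simp add: DG_def g0)
    then show ?thesis by (intro has_vector_derivative_mult_left)
  qed
  have dv: "((\<lambda>t. e0v (of_real (phi (g t)) * (cnj (x$0) + t *\<^sub>R cnj v) * \<eta> * \<zeta>)) has_vector_derivative e0v (DG x v * \<eta> * \<zeta>)) (at 0)"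
    by (rule bounded_linear.has_vector_derivative[OF bounded_linear_e0v dw])
  obtain S where S: "open S" "0 \<in> S" "\<And>t. t \<in> S \<Longrightarrow> curvept (x + t *\<^sub>R e0v v)"
    using ev_curve[OF x e0v_comp(2)[of v] e0v_comp(3)[of v]] unfolding eventually_nhds by blast
  have "((\<lambda>t. Chr 3 (x + t *\<^sub>R e0v v) (e0v \<eta>) (e0v \<zeta>)) has_vector_derivative e0v (DG x v * \<eta> * \<zeta>)) (at 0)"
  proof (rule has_vector_derivative_transform_within_open[OF dv S(1,2)])
    fix t assume "t \<in> S"
    then have "curvept (x + t *\<^sub>R e0v v)" by (rule S(3))
    then show "e0v (of_real (phi (g t)) * (cnj (x$0) + t *\<^sub>R cnj v) * \<eta> * \<zeta>) = Chr 3 (x + t *\<^sub>R e0v v) (e0v \<eta>) (e0v \<zeta>)"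
      by (simp add: Chr_curve Geq)
  qed
  then show ?thesis unfolding ddv_def by (rule vector_derivative_at)
qed


lemma Jc_e0v: "Jc (e0v c) = e0v (\<i> * c)"
  by (simp add: Jc_def e0v_def vec_eq_iff)

lemma R0_eval:
  fixes a r :: real
  shows "DG (e0v (of_real a)) (of_real r) * (\<i> * of_real r) * (\<i> * of_real r)
       - DG (e0v (of_real a)) (\<i> * of_real r) * of_real r * (\<i> * of_real r)
       + Gf (e0v (of_real a)) * of_real r * (Gf (e0v (of_real a)) * (\<i> * of_real r) * (\<i> * of_real r))
       - Gf (e0v (of_real a)) * (\<i> * of_real r) * (Gf (e0v (of_real a)) * of_real r * (\<i> * of_real r))
     = of_real (-2 * r^3 * (phi (a^2) + a^2 * phi' (a^2)))"
  by (simp add: DG_def Gf_def complex_eq_iff algebra_simps power2_eq_square power3_eq_cube)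

lemma Hol_point:
  fixes a r :: real
  assumes a: "0 < a" "a < 1"
  shows "Hol 3 (e0v (of_real a)) (e0v (of_real r)) = F (a^2) * (-2 * r^4 * (phi (a^2) + a^2 * phi' (a^2)))"
proof -
  define x where "x = e0v (of_real a :: complex)"
  have cx: "curvept x" using a by (simp add: curvept_def x_def power_less_one_iff)
  have xx: "x$1 = 0" "x$2 = 0" "0 < (cmod (x$0))^2" "(cmod (x$0))^2 < 1" using curvept_D[OF cx] by auto
  have s: "(cmod (x$0))^2 = a^2" by (simp add: x_def)
  have "Riem 3 x (e0v (of_real r)) (Jc (e0v (of_real r))) (Jc (e0v (of_real r)))
     = e0v (DG x (of_real r) * (\<i> * of_real r) * (\<i> * of_real r)
       - DG x (\<i> * of_real r) * of_real r * (\<i> * of_real r)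
       + Gf x * of_real r * (Gf x * (\<i> * of_real r) * (\<i> * of_real r))
       - Gf x * (\<i> * of_real r) * (Gf x * of_real r * (\<i> * of_real r)))"
    unfolding Riem_def Jc_e0v by (simp add: ddv_Chr[OF cx] Chr_curve[OF cx] e0v_add e0v_diff mult_ac)
  also have "\<dots> = e0v (of_real (-2 * r^3 * (phi (a^2) + a^2 * phi' (a^2))))"
    unfolding x_def by (simp only: R0_eval)
  finally have R: "Riem 3 x (e0v (of_real r)) (Jc (e0v (of_real r))) (Jc (e0v (of_real r))) = e0v (of_real (-2 * r^3 * (phi (a^2) + a^2 * phi' (a^2))))" .
  have "Hol 3 x (e0v (of_real r)) = F (a^2) * Re (of_real (-2 * r^3 * (phi (a^2) + a^2 * phi' (a^2))) * cnj (of_real r))"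
    unfolding Hol_def R using gam_curve[OF xx, of "e0v (of_real (-2 * r^3 * (phi (a^2) + a^2 * phi' (a^2))))"] s by simp
  also have "\<dots> = F (a^2) * (-2 * r^4 * (phi (a^2) + a^2 * phi' (a^2)))"
    by (simp add: power_numeral_reduce)
  finally show ?thesis unfolding x_def .
qed


lemma phi_Ic: "0 < s \<Longrightarrow> s < 1 \<Longrightarrow> phi s = Ic1 s / Ic s"
  unfolding phi_def F1_def F_def by simp

lemma phi'_Ic: "0 < s \<Longrightarrow> s < 1 \<Longrightarrow> phi' s = (Ic2 s * Ic s - (Ic1 s)^2) / (Ic s)^2"
proof -
  assume s: "0 < s" "s < 1"
  have "phi' s = (4*pi^2) * (Ic2 s * Ic s - Ic1 s * Ic1 s) / ((4*pi^2) * (Ic s * Ic s))"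
    unfolding phi'_def F2_def F1_def F_def by (simp add: algebra_simps power2_eq_square)
  also have "\<dots> = (Ic2 s * Ic s - Ic1 s * Ic1 s) / (Ic s * Ic s)"
    by (rule mult_divide_mult_cancel_left) simp
  finally show ?thesis by (simp add: power2_eq_square)
qed

definition Kf :: "real \<Rightarrow> real" where
  "Kf s = -2*(Ic1 s/Ic s + s*(Ic2 s*Ic s - (Ic1 s)^2)/(Ic s)^2)/(2*pi*Ic s)"


lemma witness:
  fixes s :: real assumes s: "0 < s" "s < 1"
  shows "\<exists>x X. x \<in> chart_dom 3 \<and> gam 3 x X X = 1 \<and> Hol 3 x X = Kf s"
proof -
  define a where "a = sqrt s"
  have a: "0 < a" "a < 1" "a^2 = s"
  proof -
    show "0 < a" using s by (simp add: a_def)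
    show "a < 1" using s by (simp add: a_def)
    show "a^2 = s" using s by (simp add: a_def)
  qed
  have Fp: "0 < F s" using F_pos s by simp
  define r where "r = 1 / sqrt (F s)"
  have r2: "r^2 = 1 / F s" using Fp by (simp add: r_def power_divide)
  have r4: "r^4 = 1 / (F s)^2"
  proof -
    have "r^4 = (r^2)^2" by simp
    then show ?thesis using r2 by (simp add: power_divide)
  qed
  define x where "x = e0v (of_real a :: complex)"
  define X where "X = e0v (of_real r :: complex)"
  have cx: "curvept x" using a s by (simp add: curvept_def x_def)
  have xx: "x$1 = 0" "x$2 = 0" "0 < (cmod (x$0))^2" "(cmod (x$0))^2 < 1" using curvept_D[OF cx] by auto
  have sx: "(cmod (x$0))^2 = s" using a by (simp add: x_def)
  have dom: "x \<in> chart_dom 3" using a by (simp add: in_M1_3 detx_def x_def)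
  have g1: "gam 3 x X X = 1"
  proof -
    have "gam 3 x X X = F s * Re (of_real r * cnj (of_real r))"
      using gam_curve[OF xx, of X X] sx by (simp add: X_def)
    also have "\<dots> = F s * r^2" by (simp add: power2_eq_square)
    also have "\<dots> = 1" using r2 Fp by simp
    finally show ?thesis .
  qed
  have "Hol 3 x X = F s * (-2 * r^4 * (phi s + s * phi' s))"
    using Hol_point[OF a(1,2), of r] a(3) by (simp add: x_def X_def)
  also have "\<dots> = -2 * (phi s + s * phi' s) * (F s * r^4)"
    by (simp only: mult_ac)
  also have "F s * r^4 = 1 / F s" using r4 Fp by (simp add: power2_eq_square)
  also have "-2 * (phi s + s * phi' s) * (1 / F s) = -2 * (phi s + s * phi' s) / F s"
    by simp
  also have "\<dots> = Kf s"
    unfolding Kf_def phi_Ic[OF s] phi'_Ic[OF s] by (simp add: F_def)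
  finally have "Hol 3 x X = Kf s" .
  with dom g1 show ?thesis by blast
qed


theorem theorem4p1:
  shows "\<not> bdd_above {Hol k x X | k x X. k < 4 \<and> x \<in> chart_dom k \<and> gam k x X X = 1}"
proof
  assume "bdd_above {Hol k x X | k x X. k < 4 \<and> x \<in> chart_dom k \<and> gam k x X X = 1}"
  then obtain B where B: "\<And>h. h \<in> {Hol k x X | k x X. k < 4 \<and> x \<in> chart_dom k \<and> gam k x X X = 1} \<Longrightarrow> h \<le> B"
    by (auto simp: bdd_above_def)
  have "eventually (\<lambda>s. B + 1 \<le> Kf s) (at_right 0)"
    using K_tendsto unfolding Kf_def[abs_def] filterlim_at_top by blast
  then obtain b where b: "b > 0" "\<And>y. 0 < y \<Longrightarrow> y < b \<Longrightarrow> B + 1 \<le> Kf y"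
    unfolding eventually_at_right_field by auto
  define s where "s = min (b/2) (1/2)"
  have s: "0 < s" "s < 1" "s < b" using b by (auto simp: s_def)
  obtain x X where w: "x \<in> chart_dom 3" "gam 3 x X X = 1" "Hol 3 x X = Kf s"
    using witness[OF s(1,2)] by blast
  have "Kf s \<in> {Hol k x X | k x X. k < 4 \<and> x \<in> chart_dom k \<and> gam k x X X = 1}"
    using w by (intro CollectI exI[of _ 3] exI[of _ x] exI[of _ X]) simp
  then have "Kf s \<le> B" by (rule B)
  moreover have "B + 1 \<le> Kf s" using b(2)[OF s(1) s(3)] .
  ultimately show False by simp
qed


end
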